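(* Let $\mathbb{P}=\{\pm p: p\text{ prime}\}$ and, for an integer $d\ge1$, let $\mathbb{P}_d=\{p,\ p+d : p\in\mathbb{P},\ p+d\in\mathbb{P}\}$. Counting autocorrelations are taken with respect to $([-n,n])_n$ or its subsequences. (a) If $\mathbb{P}_d$ is nonempty and finite, then the counting autocorrelation of $\mathbb{P}_d$ exists with respect to $([-n,n])_n$ and \[\gamma_{\mathrm{count}}=\frac{1}{\mathrm{card}(\mathbb{P}_d)}\sum_{p,q\in\mathbb{P}_d}\delta_{p-q}\neq\delta_0,\qquad \widehat{\gamma_{\mathrm{count}}}=\frac{1}{\mathrm{card}(\mathbb{P}_d)}\sum_{p,q\in\mathbb{P}_d}e^{2\pi i(p-q)x}\neq\lambda.\] Moreover $\gamma_{\mathrm{count}}(\{d\})\ge\frac12$, with equality if and only if there is no $p$ such that $p,p+d,p+2d$ are all in $\mathbb{P}$. (b) If $\mathbb{P}_d$ is infinite and $3\nmid d$, and $\gamma_{\mathrm{count}}$ is the counting autocorrelation of $\mathbb{P}_d$ with respect to a subsequence of $([-n,n])_n$, then $\gamma_{\mathrm{count}}(\{d\})=\frac12$ and $\widehat{\gamma_{\mathrm{count}}}\neq\lambda$.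
   Context: For finite $F\subseteq\mathbb{R}$, $\gamma_F=\frac{1}{\mathrm{card}(F)}\sum_{x,y\in F}\delta_{x-y}$ if $F\ne\emptyset$, $\gamma_\emptyset=0$. The counting autocorrelation of a locally finite $X$ with respect to $(A_n)_n$ is the vague limit of $\gamma_{X\cap A_n}$ (convergence on compactly supported continuous functions); its Fourier transform is the counting diffraction. $\lambda$ denotes Lebesgue measure. *)

theory Defs
  imports "HOL-Analysis.Analysis" "HOL-Computational_Algebra.Primes"
begin

definition has_compact_support :: "(real \<Rightarrow> 'a::zero) \<Rightarrow> bool" where
  "has_compact_support f \<longleftrightarrow> compact (closure {x. f x \<noteq> 0})"

definition radon_measure :: "real measure \<Rightarrow> bool" where
  "radon_measure \<mu> \<longleftrightarrow> sets \<mu> = sets borel \<and>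
     (\<forall>K. compact K \<longrightarrow> emeasure \<mu> K < \<infinity>)"

text \<open>gamma_F = (1/card F) * sum over x,y in F of delta_(x-y); gamma_{} = 0.\<close>
definition gammaF :: "real set \<Rightarrow> real measure" where
  "gammaF F = (if F = {} then null_measure borel
     else scale_measure (ennreal (1 / real (card F)))
            (distr (count_space (F \<times> F)) borel (\<lambda>(x, y). x - y)))"

definition vague_lim :: "(nat \<Rightarrow> real measure) \<Rightarrow> real measure \<Rightarrow> bool" where
  "vague_lim \<mu> \<nu> \<longleftrightarrow> radon_measure \<nu> \<and>
     (\<forall>f :: real \<Rightarrow> real. continuous_on UNIV f \<and> has_compact_support f \<longrightarrow>
        (\<lambda>n. integral\<^sup>L (\<mu> n) f) \<longlonglongrightarrow> integral\<^sup>L \<nu> f)"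

definition count_autocorr :: "real set \<Rightarrow> (nat \<Rightarrow> real set) \<Rightarrow> real measure \<Rightarrow> bool" where
  "count_autocorr X A \<gamma> \<longleftrightarrow> vague_lim (\<lambda>n. gammaF (X \<inter> A n)) \<gamma>"

definition inv_fourier :: "(real \<Rightarrow> complex) \<Rightarrow> real \<Rightarrow> complex" where
  "inv_fourier f x = (\<integral>t. f t * exp (2 * pi * \<i> * complex_of_real (t * x)) \<partial>lborel)"

text \<open>f * f~ where f~(x) = conj (f (-x)).\<close>
definition conv_tilde :: "(real \<Rightarrow> complex) \<Rightarrow> real \<Rightarrow> complex" where
  "conv_tilde f x = (\<integral>t. f t * cnj (f (t - x)) \<partial>lborel)"

text \<open>omega is the Fourier transform of the (positive definite) measure gamma
  (Berg--Forst): for all f in C_c(R), int (f * f~) d gamma = int |f-check|^2 d omega.\<close>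
definition is_fourier_transform :: "real measure \<Rightarrow> real measure \<Rightarrow> bool" where
  "is_fourier_transform \<gamma> \<omega> \<longleftrightarrow> radon_measure \<omega> \<and>
     (\<forall>f :: real \<Rightarrow> complex. continuous_on UNIV f \<and> has_compact_support f \<longrightarrow>
        integrable \<omega> (\<lambda>x. (cmod (inv_fourier f x))\<^sup>2) \<and>
        integrable \<gamma> (conv_tilde f) \<and>
        (\<integral>x. conv_tilde f x \<partial>\<gamma>) = complex_of_real (\<integral>x. (cmod (inv_fourier f x))\<^sup>2 \<partial>\<omega>))"

definition dirac :: "real \<Rightarrow> real measure" where
  "dirac a = measure_of UNIV (sets borel) (\<lambda>A. indicator A a)"

definition signed_primes :: "real set" where
  "signed_primes = {x. \<exists>p::nat. prime p \<and> (x = real p \<or> x = - real p)}"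

definition prime_pairs :: "nat \<Rightarrow> real set" where
  "prime_pairs d = {x. \<exists>p \<in> signed_primes. p + real d \<in> signed_primes \<and>
                       (x = p \<or> x = p + real d)}"

end

theory Submission
  imports Defs "HOL-Probability.Probability"
begin


abbreviation ee :: "real \<Rightarrow> complex" where
  "ee u \<equiv> exp (2 * pi * \<i> * complex_of_real u)"

lemma ee_norm[simp]: "norm (ee u) = 1"
  by (simp add: norm_exp_eq_Re)

lemma ee_add: "ee a * ee b = ee (a + b)"
  by (simp add: exp_add[symmetric] distrib_left)

lemma ee_cnj: "cnj (ee a) = ee (- a)"
  by (simp add: exp_cnj)

lemma hcs_iff: "has_compact_support f \<longleftrightarrow> bounded {x. f x \<noteq> 0}"
  unfolding has_compact_support_def by simp

lemma hcs_L:
  assumes "has_compact_support f"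
  obtains L :: real where "L > 0" "\<And>x. f x \<noteq> 0 \<Longrightarrow> \<bar>x\<bar> \<le> L"
proof -
  from assms obtain a where a: "\<forall>x\<in>{x. f x \<noteq> 0}. norm x \<le> a"
    unfolding hcs_iff bounded_iff by blast
  show ?thesis
    by (rule that[of "max a 1"]) (use a in auto)
qed

lemma cs_bounded:
  fixes f :: "real \<Rightarrow> 'b::real_normed_vector"
  assumes c: "continuous_on UNIV f" and "has_compact_support f"
  obtains M where "M > 0" "\<And>x. norm (f x) \<le> M"
proof -
  obtain L where L: "L > 0" "\<And>x. f x \<noteq> 0 \<Longrightarrow> \<bar>x\<bar> \<le> L" using hcs_L assms(2) by blast
  have "compact (f ` {-L..L})"
    by (rule compact_continuous_image) (use c continuous_on_subset in auto)
  then obtain B where B: "\<forall>y\<in>f ` {-L..L}. norm y \<le> B"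
    using compact_imp_bounded bounded_iff by metis
  show ?thesis
  proof (rule that[of "max B 1"])
    fix x show "norm (f x) \<le> max B 1"
    proof (cases "f x = 0")
      case False
      then have "x \<in> {-L..L}" using L(2)[of x] by (auto simp: abs_le_iff)
      then show ?thesis using B by force
    qed simp
  qed simp
qed

lemma cs_integrable:
  fixes f :: "real \<Rightarrow> 'b::{banach, second_countable_topology}"
  assumes c: "continuous_on UNIV f" and "has_compact_support f"
  shows "integrable lborel f"
proof -
  obtain L where L: "L > 0" "\<And>x. f x \<noteq> 0 \<Longrightarrow> \<bar>x\<bar> \<le> L" using hcs_L assms(2) by blast
  have "integrable lborel (\<lambda>x. indicator {-L..L} x *\<^sub>R f x)"
    by (rule borel_integrable_compact) (use c continuous_on_subset in auto)
  also have "(\<lambda>x. indicator {-L..L} x *\<^sub>R f x) = f"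
  proof
    fix x show "indicator {-L..L} x *\<^sub>R f x = f x"
      using L(2)[of x] by (cases "f x = 0") (auto simp: indicator_def abs_le_iff)
  qed
  finally show ?thesis .
qed

lemma cont_meas:
  fixes f :: "real \<Rightarrow> 'b::{banach, second_countable_topology}"
  assumes "continuous_on UNIV f"
  shows "f \<in> borel_measurable borel"
  using assms by (rule borel_measurable_continuous_onI)

lemma cont_meas_lborel:
  fixes f :: "real \<Rightarrow> 'b::{banach, second_countable_topology}"
  assumes "continuous_on UNIV f"
  shows "f \<in> borel_measurable lborel"
  using assms by (simp add: borel_measurable_continuous_onI)

lemma cont_param:
  fixes K :: "real \<Rightarrow> real \<Rightarrow> 'b::{banach, second_countable_topology}"
  assumes m: "\<And>x. K x \<in> borel_measurable lborel"
    and c: "\<And>t. continuous_on UNIV (\<lambda>x. K x t)"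
    and B: "integrable lborel B" and bd: "\<And>x t. norm (K x t) \<le> B t"
  shows "continuous_on UNIV (\<lambda>x. \<integral>t. K x t \<partial>lborel)"
proof -
  have "continuous (at x) (\<lambda>x. \<integral>t. K x t \<partial>lborel)" for x
  proof (rule continuous_at_sequentiallyI)
    fix X assume X: "X \<longlonglongrightarrow> x"
    show "(\<lambda>n. \<integral>t. K (X n) t \<partial>lborel) \<longlonglongrightarrow> \<integral>t. K x t \<partial>lborel"
    proof (rule integral_dominated_convergence[where w=B])
      show "AE t in lborel. (\<lambda>n. K (X n) t) \<longlonglongrightarrow> K x t"
      proof (rule AE_I2)
        fix t
        have "isCont (\<lambda>x. K x t) x" using c[of t] continuous_on_eq_continuous_at by blast
        then show "(\<lambda>n. K (X n) t) \<longlonglongrightarrow> K x t" using X isCont_tendsto_compose by blast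
      qed
    qed (use m B bd in auto)
  qed
  then show ?thesis by (simp add: continuous_at_imp_continuous_on)
qed


lemma cexp_meas[measurable]: "(\<lambda>u. ee u) \<in> borel_measurable borel"
  by (intro borel_measurable_continuous_onI continuous_intros)

lemma g_cont:
  assumes c: "continuous_on UNIV f" and s: "has_compact_support f"
  shows "continuous_on UNIV (conv_tilde f)"
proof -
  obtain M where M: "M > 0" "\<And>x. norm (f x) \<le> M" using cs_bounded[OF c s] by blast
  have fm[measurable]: "f \<in> borel_measurable borel" using c by (rule cont_meas)
  have "continuous_on UNIV (\<lambda>x. \<integral>t. f t * cnj (f (t - x)) \<partial>lborel)"
  proof (rule cont_param[where B="\<lambda>t. norm (f t) * M"])
    show "integrable lborel (\<lambda>t. norm (f t) * M)"
      using cs_integrable[OF c s] by auto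
    show "norm (f t * cnj (f (t - x))) \<le> norm (f t) * M" for x t
      using M by (simp add: norm_mult mult_left_mono)
    show "continuous_on UNIV (\<lambda>x. f t * cnj (f (t - x)))" for t
      by (intro continuous_intros continuous_on_compose2[OF c]) auto
    show "(\<lambda>t. f t * cnj (f (t - x))) \<in> borel_measurable lborel" for x
      by (intro cont_meas_lborel continuous_intros continuous_on_compose2[OF c]) auto
  qed
  then show ?thesis unfolding conv_tilde_def[abs_def] .
qed

lemma g_support:
  assumes L: "\<And>x. f x \<noteq> 0 \<Longrightarrow> \<bar>x\<bar> \<le> L" and y: "\<bar>y\<bar> > 2 * L"
  shows "conv_tilde f y = 0"
proof -
  have "f t * cnj (f (t - y)) = 0" for t
  proof (cases "f t = 0")
    case False
    then have "\<bar>t\<bar> \<le> L" using L by blast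
    then have "\<bar>t - y\<bar> > L" using y by auto
    then have "f (t - y) = 0" using L by force
    then show ?thesis by simp
  qed simp
  then have "(\<lambda>t. f t * cnj (f (t - y))) = (\<lambda>_. 0)" by auto
  then show ?thesis unfolding conv_tilde_def by simp
qed

lemma g_hcs:
  assumes c: "continuous_on UNIV f" and s: "has_compact_support f"
  shows "has_compact_support (conv_tilde f)"
proof -
  obtain L where L: "L > 0" "\<And>x. f x \<noteq> 0 \<Longrightarrow> \<bar>x\<bar> \<le> L" using hcs_L s by blast
  have "{x. conv_tilde f x \<noteq> 0} \<subseteq> cball 0 (2 * L)"
  proof
    fix x assume "x \<in> {x. conv_tilde f x \<noteq> 0}"
    then have "\<not> \<bar>x\<bar> > 2 * L" using g_support[OF L(2)] by blast
    then show "x \<in> cball 0 (2 * L)" by simp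
  qed
  then show ?thesis unfolding hcs_iff using bounded_cball bounded_subset by blast
qed

lemma fhat_cont:
  assumes c: "continuous_on UNIV f" and s: "has_compact_support f"
  shows "continuous_on UNIV (inv_fourier f)"
proof -
  have fm[measurable]: "f \<in> borel_measurable borel" using c by (rule cont_meas)
  have "continuous_on UNIV (\<lambda>x. \<integral>t. f t * ee (t * x) \<partial>lborel)"
  proof (rule cont_param[where B="\<lambda>t. norm (f t)"])
    show "integrable lborel (\<lambda>t. norm (f t))"
      using cs_integrable[OF c s] by auto
    show "norm (f t * ee (t * x)) \<le> norm (f t)" for x t
      by (simp add: norm_mult)
    show "continuous_on UNIV (\<lambda>x. f t * ee (t * x))" for t
      by (intro continuous_intros)
    show "(\<lambda>t. f t * ee (t * x)) \<in> borel_measurable lborel" for x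
      by (intro cont_meas_lborel continuous_intros c)
  qed
  then show ?thesis unfolding inv_fourier_def[abs_def] .
qed


lemma integrable_prod_bound:
  fixes F :: "real \<times> real \<Rightarrow> 'b::{banach, second_countable_topology}"
  assumes u: "integrable lborel u" and v: "integrable lborel v"
    and m: "F \<in> borel_measurable (lborel \<Otimes>\<^sub>M lborel)"
    and bd: "\<And>x y. norm (F (x, y)) \<le> u x * v y"
  shows "integrable (lborel \<Otimes>\<^sub>M lborel) F"
proof (rule Bochner_Integration.integrable_bound[OF _ m])
  interpret P: pair_sigma_finite lborel lborel ..
  have um[measurable]: "u \<in> borel_measurable borel" and vm[measurable]: "v \<in> borel_measurable borel"
    using u v by auto
  show "integrable (lborel \<Otimes>\<^sub>M lborel) (\<lambda>(x, y). norm (u x) * norm (v y))"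
  proof (subst integrable_iff_bounded, safe)
    show "(\<lambda>(x, y). norm (u x) * norm (v y)) \<in> borel_measurable (lborel \<Otimes>\<^sub>M lborel)"
      by measurable
    have "(\<integral>\<^sup>+ z. ennreal (norm ((\<lambda>(x, y). norm (u x) * norm (v y)) z)) \<partial>(lborel \<Otimes>\<^sub>M lborel))
        = (\<integral>\<^sup>+ x. \<integral>\<^sup>+ y. ennreal (norm (u x)) * ennreal (norm (v y)) \<partial>lborel \<partial>lborel)"
      by (subst lborel.nn_integral_fst[symmetric]) (auto simp: ennreal_mult)
    also have "\<dots> = (\<integral>\<^sup>+ x. ennreal (norm (u x)) \<partial>lborel) * (\<integral>\<^sup>+ y. ennreal (norm (v y)) \<partial>lborel)"
      by (simp add: nn_integral_cmult nn_integral_multc)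
    also have "\<dots> < \<infinity>"
      using u v unfolding integrable_iff_bounded by (simp add: ennreal_mult_less_top)
    finally show "(\<integral>\<^sup>+ z. ennreal (norm ((\<lambda>(x, y). norm (u x) * norm (v y)) z)) \<partial>(lborel \<Otimes>\<^sub>M lborel)) < \<infinity>" .
  qed
  show "AE x in lborel \<Otimes>\<^sub>M lborel. norm (F x) \<le> norm ((\<lambda>(x, y). norm (u x) * norm (v y)) x)"
  proof (rule AE_I2)
    fix z :: "real \<times> real"
    obtain x y where z: "z = (x,y)" by (cases z)
    have "norm (F (x, y)) \<le> \<bar>u x * v y\<bar>" using bd[of x y] by linarith
    then show "norm (F z) \<le> norm ((\<lambda>(x, y). norm (u x) * norm (v y)) z)" by (simp add: z abs_mult)
  qed
qed


lemma integrable_ind_real[simp]: "integrable lborel (indicator {a..b::real} :: real \<Rightarrow> real)"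
  by (rule integrable_real_indicator) (auto simp: emeasure_lborel_Icc_eq)

lemma cont_meas_lborel2:
  fixes F :: "real \<times> real \<Rightarrow> 'b::{banach, second_countable_topology}"
  assumes "continuous_on UNIV F"
  shows "F \<in> borel_measurable (lborel \<Otimes>\<^sub>M lborel)"
  using assms unfolding lborel_prod by (simp add: borel_measurable_continuous_onI)

lemma ee_shift: "ee ((t + -1 * s) * x) = ee (t * x) * cnj (ee (s * x))"
proof -
  have e1: "(t + -1 * s) * x = t * x + - (s * x)" by (simp add: algebra_simps)
  show ?thesis by (simp only: e1 ee_add[symmetric] ee_cnj)
qed

lemma fub1:
  assumes c: "continuous_on UNIV f" and s: "has_compact_support f"
  shows "(\<integral>y. conv_tilde f y * ee (y * x) \<partial>lborel) = complex_of_real ((cmod (inv_fourier f x))\<^sup>2)"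
proof -
  obtain L where L: "L > 0" "\<And>x. f x \<noteq> 0 \<Longrightarrow> \<bar>x\<bar> \<le> L" using hcs_L s by blast
  obtain M where M: "M > 0" "\<And>x. norm (f x) \<le> M" using cs_bounded[OF c s] by blast
  have fi: "integrable lborel f" by (rule cs_integrable[OF c s])

  define H where "H t y = f t * cnj (f (t - y)) * ee (y * x)" for t y
  have int: "integrable (lborel \<Otimes>\<^sub>M lborel) (\<lambda>(t, y). H t y)"
  proof (rule integrable_prod_bound[where u="\<lambda>t. norm (f t)" and v="\<lambda>y. M * indicator {-2*L..2*L} y"])
    show "integrable lborel (\<lambda>t. norm (f t))" using fi by auto
    show "integrable lborel (\<lambda>y. M * indicator {-2*L..2*L} y)" by auto
    have "continuous_on UNIV (\<lambda>z::real\<times>real. f (fst z) * cnj (f (fst z - snd z)) * ee (snd z * x))"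
      by (intro continuous_intros continuous_on_compose2[OF c]) auto
    then show "(\<lambda>(t, y). H t y) \<in> borel_measurable (lborel \<Otimes>\<^sub>M lborel)"
      unfolding H_def by (intro cont_meas_lborel2) (simp add: case_prod_beta')
    show "norm ((\<lambda>(t, y). H t y) (t, y)) \<le> norm (f t) * (M * indicator {-2*L..2*L} y)" for t y
    proof (cases "f t = 0 \<or> f (t - y) = 0")
      case True
      then show ?thesis using M(1) by (auto simp: H_def indicator_def)
    next
      case False
      then have "\<bar>t\<bar> \<le> L" "\<bar>t - y\<bar> \<le> L" using L by auto
      then have "y \<in> {-2*L..2*L}" by auto
      then show ?thesis using M(2)[of "t - y"]
        by (simp add: H_def norm_mult mult_left_mono)
    qed
  qed
  have "(\<integral>y. conv_tilde f y * ee (y * x) \<partial>lborel) = (\<integral>y. \<integral>t. H t y \<partial>lborel \<partial>lborel)"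
    unfolding conv_tilde_def H_def by (simp add: integral_mult_left_zero)
  also have "\<dots> = (\<integral>t. \<integral>y. H t y \<partial>lborel \<partial>lborel)"
    by (rule lborel_pair.Fubini_integral[OF int])
  also have "\<dots> = (\<integral>t. f t * ee (t * x) * cnj (inv_fourier f x) \<partial>lborel)"
  proof (rule Bochner_Integration.integral_cong[OF refl])
    fix t
    have "(\<integral>y. H t y \<partial>lborel) = f t * (\<integral>y. cnj (f (t - y)) * ee (y * x) \<partial>lborel)"
      unfolding H_def by (simp add: integral_mult_right_zero mult.assoc)
    also have "(\<integral>y. cnj (f (t - y)) * ee (y * x) \<partial>lborel)
        = \<bar>-1\<bar> *\<^sub>R (\<integral>s. cnj (f (t - (t + -1 * s))) * ee ((t + -1 * s) * x) \<partial>lborel)"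
      by (rule lborel_integral_real_affine) simp
    also have "\<dots> = (\<integral>s. ee (t * x) * cnj (f s * ee (s * x)) \<partial>lborel)"
      by (simp only: ee_shift) (simp add: mult_ac)
    also have "\<dots> = ee (t * x) * cnj (inv_fourier f x)"
      unfolding inv_fourier_def by (simp only: integral_mult_right_zero Bochner_Integration.integral_cnj)
    finally show "(\<integral>y. H t y \<partial>lborel) = f t * ee (t * x) * cnj (inv_fourier f x)"
      by (simp add: mult_ac)
  qed
  also have "\<dots> = inv_fourier f x * cnj (inv_fourier f x)"
    unfolding inv_fourier_def by (simp add: integral_mult_left_zero)
  also have "\<dots> = complex_of_real ((cmod (inv_fourier f x))\<^sup>2)"
    by (rule complex_norm_square[symmetric])
  finally show ?thesis .
qed


lemma gauss_ft:
  assumes s: "s > 0"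
  shows "(\<integral>x. ee (u * x) * complex_of_real (exp (-(pi * (s*x)\<^sup>2))) \<partial>lborel)
       = complex_of_real (exp (-(pi * (u/s)\<^sup>2)) / s)"
proof -
  define c where "c = sqrt (2 * pi) * s"
  define t where "t = 2 * pi * u / c"
  have c0: "c > 0" unfolding c_def using s by simp
  have sq: "(sqrt (2 * pi))\<^sup>2 = 2 * pi" by simp
  have m1: "(\<lambda>y. iexp (t * y)) \<in> borel_measurable lborel"
    by (intro cont_meas_lborel continuous_intros)
  have "complex_of_real (exp (- (t\<^sup>2) / 2)) = char std_normal_distribution t"
    by (simp add: char_std_normal_distribution)
  also have "\<dots> = (\<integral>y. std_normal_density y *\<^sub>R iexp (t * y) \<partial>lborel)"
    unfolding char_def using m1 by (subst integral_density) auto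
  also have "\<dots> = \<bar>c\<bar> *\<^sub>R (\<integral>x. std_normal_density (0 + c * x) *\<^sub>R iexp (t * (0 + c * x)) \<partial>lborel)"
    by (rule lborel_integral_real_affine) (use c0 in simp)
  also have "\<dots> = c *\<^sub>R (\<integral>x. (1 / sqrt (2 * pi)) *\<^sub>R (ee (u * x) * complex_of_real (exp (-(pi * (s*x)\<^sup>2)))) \<partial>lborel)"
  proof -
    have "std_normal_density (0 + c * x) *\<^sub>R iexp (t * (0 + c * x))
        = (1 / sqrt (2 * pi)) *\<^sub>R (ee (u * x) * complex_of_real (exp (-(pi * (s*x)\<^sup>2))))" for x
    proof -
      have a1: "(c * x)\<^sup>2 / 2 = pi * (s * x)\<^sup>2"
        unfolding c_def by (simp add: power_mult_distrib sq)
      have a2: "t * (c * x) = 2 * pi * (u * x)"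
        unfolding t_def using c0 by (simp add: field_simps)
      have a3: "iexp (2 * pi * (u * x)) = ee (u * x)"
        by (simp add: mult_ac)
      have b0: "t * (0 + c * x) = 2 * pi * (u * x)" using a2 by simp
      have b: "iexp (t * (0 + c * x)) = ee (u * x)" unfolding b0 by (rule a3)
      show ?thesis unfolding b
        by (simp add: normal_density_def a1 scaleR_conv_of_real mult_ac)
    qed
    then show ?thesis using c0 by simp
  qed
  also have "\<dots> = (c / sqrt (2 * pi)) *\<^sub>R (\<integral>x. ee (u * x) * complex_of_real (exp (-(pi * (s*x)\<^sup>2))) \<partial>lborel)"
    by simp
  also have "c / sqrt (2 * pi) = s" unfolding c_def by simp
  finally have *: "complex_of_real (exp (- (t\<^sup>2) / 2)) = s *\<^sub>R (\<integral>x. ee (u * x) * complex_of_real (exp (-(pi * (s*x)\<^sup>2))) \<partial>lborel)" .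
  have "t\<^sup>2 / 2 = pi * (u / s)\<^sup>2"
    unfolding t_def c_def using s by (simp add: power_divide power_mult_distrib sq field_simps power2_eq_square)
  then have "(\<integral>x. ee (u * x) * complex_of_real (exp (-(pi * (s*x)\<^sup>2))) \<partial>lborel) = (1/s) *\<^sub>R complex_of_real (exp (-(pi * (u/s)\<^sup>2)))"
    using * s by (simp add: minus_divide_left)
  then show ?thesis by (simp add: scaleR_conv_of_real)
qed


lemma w_int:
  assumes "s > 0"
  shows "integrable lborel (\<lambda>x. exp (-(pi * (s*x)\<^sup>2)))"
proof -
  have False: "s \<noteq> 0" using assms by simp
  define c where "c = sqrt (2 * pi) * s"
  have c0: "c \<noteq> 0" unfolding c_def using False by simp
  have "integrable lborel (\<lambda>x. std_normal_density (0 + c * x))"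
    by (rule lborel_integrable_real_affine[OF integrable_normal_density c0]) simp
  then have i2: "integrable lborel (\<lambda>x. sqrt (2 * pi) * std_normal_density (0 + c * x))"
    by (rule integrable_mult_right)
  have "sqrt (2 * pi) * std_normal_density (0 + c * x) = exp (-(pi * (s*x)\<^sup>2))" for x
    unfolding c_def normal_density_def by (simp add: power_mult_distrib)
  then have "(\<lambda>x. sqrt (2 * pi) * std_normal_density (0 + c * x)) = (\<lambda>x. exp (-(pi * (s*x)\<^sup>2)))"
    by auto
  with i2 show ?thesis by (simp only:)
qed


lemma fub2:
  assumes c: "continuous_on UNIV f" and sp: "has_compact_support f" and s: "s > 0"
  shows "(\<integral>x. complex_of_real ((cmod (inv_fourier f x))\<^sup>2) * ee (-a*x) * complex_of_real (exp (-(pi*(s*x)\<^sup>2))) \<partial>lborel)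
       = (\<integral>y. conv_tilde f y * complex_of_real (exp (-(pi*((y-a)/s)\<^sup>2)) / s) \<partial>lborel)"
proof -
  let ?g = "conv_tilde f"
  have gc: "continuous_on UNIV ?g" by (rule g_cont[OF c sp])
  have gs: "has_compact_support ?g" by (rule g_hcs[OF c sp])
  have gi: "integrable lborel ?g" by (rule cs_integrable[OF gc gs])
  define K where "K x y = ?g y * (ee ((y - a) * x) * complex_of_real (exp (-(pi*(s*x)\<^sup>2))))" for x y
  have int: "integrable (lborel \<Otimes>\<^sub>M lborel) (\<lambda>(x, y). K x y)"
  proof (rule integrable_prod_bound[where u="\<lambda>x. exp (-(pi*(s*x)\<^sup>2))" and v="\<lambda>y. norm (?g y)"])
    show "integrable lborel (\<lambda>x. exp (-(pi*(s*x)\<^sup>2)))" by (rule w_int[OF s])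
    show "integrable lborel (\<lambda>y. norm (?g y))" using gi by auto
    have "continuous_on UNIV (\<lambda>z::real\<times>real. ?g (snd z) * (ee ((snd z - a) * fst z) * complex_of_real (exp (-(pi*(s*fst z)\<^sup>2)))))"
      by (intro continuous_intros continuous_on_compose2[OF gc]) auto
    then show "(\<lambda>(x, y). K x y) \<in> borel_measurable (lborel \<Otimes>\<^sub>M lborel)"
      unfolding K_def by (intro cont_meas_lborel2) (simp add: case_prod_beta')
    show "norm ((\<lambda>(x, y). K x y) (x, y)) \<le> exp (-(pi*(s*x)\<^sup>2)) * norm (?g y)" for x y
      by (simp add: K_def norm_mult)
  qed
  have "(\<integral>x. complex_of_real ((cmod (inv_fourier f x))\<^sup>2) * ee (-a*x) * complex_of_real (exp (-(pi*(s*x)\<^sup>2))) \<partial>lborel)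
      = (\<integral>x. \<integral>y. K x y \<partial>lborel \<partial>lborel)"
  proof (rule Bochner_Integration.integral_cong[OF refl])
    fix x
    have e: "ee (y * x) * ee (-a * x) = ee ((y - a) * x)" for y
    proof -
      have "(y - a) * x = y * x + -a * x" by (simp add: algebra_simps)
      then show ?thesis by (simp only: ee_add)
    qed
    have "complex_of_real ((cmod (inv_fourier f x))\<^sup>2) * ee (-a*x) * complex_of_real (exp (-(pi*(s*x)\<^sup>2)))
        = (\<integral>y. ?g y * ee (y * x) \<partial>lborel) * (ee (-a*x) * complex_of_real (exp (-(pi*(s*x)\<^sup>2))))"
      unfolding fub1[OF c sp] by (simp only: mult.assoc)
    also have "\<dots> = (\<integral>y. ?g y * ee (y * x) * (ee (-a*x) * complex_of_real (exp (-(pi*(s*x)\<^sup>2)))) \<partial>lborel)"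
      by (simp add: integral_mult_left_zero)
    also have "\<dots> = (\<integral>y. K x y \<partial>lborel)"
      unfolding K_def e[symmetric] by (simp only: mult.assoc)
    finally show "complex_of_real ((cmod (inv_fourier f x))\<^sup>2) * ee (-a*x) * complex_of_real (exp (-(pi*(s*x)\<^sup>2)))
        = (\<integral>y. K x y \<partial>lborel)" .
  qed
  also have "\<dots> = (\<integral>y. \<integral>x. K x y \<partial>lborel \<partial>lborel)"
    by (rule lborel_pair.Fubini_integral[OF int, symmetric])
  also have "\<dots> = (\<integral>y. ?g y * complex_of_real (exp (-(pi*((y-a)/s)\<^sup>2)) / s) \<partial>lborel)"
  proof (rule Bochner_Integration.integral_cong[OF refl])
    fix y
    have "(\<integral>x. K x y \<partial>lborel) = ?g y * (\<integral>x. ee ((y - a) * x) * complex_of_real (exp (-(pi*(s*x)\<^sup>2))) \<partial>lborel)"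
      unfolding K_def by (rule integral_mult_right_zero)
    also have "\<dots> = ?g y * complex_of_real (exp (-(pi*((y-a)/s)\<^sup>2)) / s)"
      by (simp only: gauss_ft[OF s])
    finally show "(\<integral>x. K x y \<partial>lborel) = ?g y * complex_of_real (exp (-(pi*((y-a)/s)\<^sup>2)) / s)" .
  qed
  finally show ?thesis .
qed

lemma resc:
  fixes G :: "real \<Rightarrow> complex"
  assumes s: "s > 0"
  shows "(\<integral>y. G y * complex_of_real (exp (-(pi*((y-a)/s)\<^sup>2)) / s) \<partial>lborel)
       = (\<integral>z. G (a + s * z) * complex_of_real (exp (-(pi*z\<^sup>2))) \<partial>lborel)"
proof -
  have "(\<integral>y. G y * complex_of_real (exp (-(pi*((y-a)/s)\<^sup>2)) / s) \<partial>lborel)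
      = \<bar>s\<bar> *\<^sub>R (\<integral>z. G (a + s * z) * complex_of_real (exp (-(pi*((a + s * z - a)/s)\<^sup>2)) / s) \<partial>lborel)"
    by (rule lborel_integral_real_affine) (use s in simp)
  also have "\<dots> = s *\<^sub>R (\<integral>z. (1/s) *\<^sub>R (G (a + s * z) * complex_of_real (exp (-(pi*z\<^sup>2)))) \<partial>lborel)"
    using s by (simp add: scaleR_conv_of_real mult_ac)
  also have "\<dots> = (\<integral>z. G (a + s * z) * complex_of_real (exp (-(pi*z\<^sup>2))) \<partial>lborel)"
    using s by simp
  finally show ?thesis .
qed

lemma gauss_one: "(\<integral>z. complex_of_real (exp (-(pi*z\<^sup>2))) \<partial>lborel) = 1"
  using gauss_ft[of 1 0] by simp

lemma approx:
  fixes G :: "real \<Rightarrow> complex"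
  assumes gc: "continuous_on UNIV G" and B: "\<And>y. norm (G y) \<le> B"
  shows "(\<lambda>k. \<integral>z. G (a + inverse (real (Suc k)) * z) * complex_of_real (exp (-(pi*z\<^sup>2))) \<partial>lborel) \<longlonglongrightarrow> G a"
proof -
  have "(\<lambda>k. \<integral>z. G (a + inverse (real (Suc k)) * z) * complex_of_real (exp (-(pi*z\<^sup>2))) \<partial>lborel)
      \<longlonglongrightarrow> (\<integral>z. G a * complex_of_real (exp (-(pi*z\<^sup>2))) \<partial>lborel)"
  proof (rule integral_dominated_convergence[where w="\<lambda>z. B * exp (-(pi*z\<^sup>2))"])
    show "integrable lborel (\<lambda>z. B * exp (-(pi*z\<^sup>2)))"
      using w_int[of 1] by simp
    show "(\<lambda>z. G a * complex_of_real (exp (-(pi*z\<^sup>2)))) \<in> borel_measurable lborel"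
      by (intro cont_meas_lborel continuous_intros)
    show "(\<lambda>z. G (a + inverse (real (Suc k)) * z) * complex_of_real (exp (-(pi*z\<^sup>2)))) \<in> borel_measurable lborel" for k
      by (intro cont_meas_lborel continuous_intros continuous_on_compose2[OF gc]) auto
    show "AE z in lborel. norm (G (a + inverse (real (Suc k)) * z) * complex_of_real (exp (-(pi*z\<^sup>2)))) \<le> B * exp (-(pi*z\<^sup>2))" for k
      using B by (intro AE_I2) (simp add: norm_mult mult_right_mono)
    show "AE z in lborel. (\<lambda>k. G (a + inverse (real (Suc k)) * z) * complex_of_real (exp (-(pi*z\<^sup>2)))) \<longlonglongrightarrow> G a * complex_of_real (exp (-(pi*z\<^sup>2)))"
    proof (rule AE_I2)
      fix z
      have "(\<lambda>k. a + inverse (real (Suc k)) * z) \<longlonglongrightarrow> a + 0 * z"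
        by (intro tendsto_intros LIMSEQ_inverse_real_of_nat)
      then have "(\<lambda>k. a + inverse (real (Suc k)) * z) \<longlonglongrightarrow> a" by simp
      moreover have "isCont G a" using gc continuous_on_eq_continuous_at by blast
      ultimately have "(\<lambda>k. G (a + inverse (real (Suc k)) * z)) \<longlonglongrightarrow> G a"
        using isCont_tendsto_compose by blast
      then show "(\<lambda>k. G (a + inverse (real (Suc k)) * z) * complex_of_real (exp (-(pi*z\<^sup>2)))) \<longlonglongrightarrow> G a * complex_of_real (exp (-(pi*z\<^sup>2)))"
        by (intro tendsto_intros)
    qed
  qed
  also have "(\<integral>z. G a * complex_of_real (exp (-(pi*z\<^sup>2))) \<partial>lborel) = G a"
    by (simp only: integral_mult_right_zero gauss_one) simp
  finally show ?thesis .
qed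


lemma fhat_bound:
  assumes c: "continuous_on UNIV f" and sp: "has_compact_support f"
  shows "norm (inv_fourier f x) \<le> (\<integral>t. norm (f t) \<partial>lborel)"
proof -
  have "norm (inv_fourier f x) \<le> (\<integral>t. norm (f t * ee (t * x)) \<partial>lborel)"
    unfolding inv_fourier_def by (rule integral_norm_bound)
  also have "\<dots> = (\<integral>t. norm (f t) \<partial>lborel)" by (simp add: norm_mult)
  finally show ?thesis .
qed

lemma inversion:
  assumes c: "continuous_on UNIV f" and sp: "has_compact_support f"
  shows "integrable lborel (\<lambda>x. (cmod (inv_fourier f x))\<^sup>2)"
    and "(\<integral>x. complex_of_real ((cmod (inv_fourier f x))\<^sup>2) * ee (-a*x) \<partial>lborel) = conv_tilde f a"
proof -
  define \<Phi> where "\<Phi> x = (cmod (inv_fourier f x))\<^sup>2" for x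
  define sk where "sk k = inverse (real (Suc k))" for k
  define J where "J a k = (\<integral>x. complex_of_real (\<Phi> x) * ee (-a*x) * complex_of_real (exp (-(pi*(sk k*x)\<^sup>2))) \<partial>lborel)" for a k
  let ?g = "conv_tilde f"
  have gc: "continuous_on UNIV ?g" by (rule g_cont[OF c sp])
  have gs: "has_compact_support ?g" by (rule g_hcs[OF c sp])
  obtain B where B: "B > 0" "\<And>y. norm (?g y) \<le> B" using cs_bounded[OF gc gs] by blast
  have sk0: "sk k > 0" for k unfolding sk_def by simp
  have Jlim: "(J a) \<longlonglongrightarrow> ?g a" for a
  proof -
    have "J a k = (\<integral>z. ?g (a + inverse (real (Suc k)) * z) * complex_of_real (exp (-(pi*z\<^sup>2))) \<partial>lborel)" for k
    proof -
      have "J a k = (\<integral>y. ?g y * complex_of_real (exp (-(pi*((y-a)/sk k)\<^sup>2)) / sk k) \<partial>lborel)"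
        unfolding J_def \<Phi>_def by (rule fub2[OF c sp sk0])
      also have "\<dots> = (\<integral>z. ?g (a + sk k * z) * complex_of_real (exp (-(pi*z\<^sup>2))) \<partial>lborel)"
        by (rule resc[OF sk0])
      finally show ?thesis unfolding sk_def .
    qed
    then have "J a = (\<lambda>k. \<integral>z. ?g (a + inverse (real (Suc k)) * z) * complex_of_real (exp (-(pi*z\<^sup>2))) \<partial>lborel)"
      by (intro ext)
    then show ?thesis using approx[OF gc B(2), of a] by (simp only:)
  qed
  have \<Phi>c: "continuous_on UNIV \<Phi>"
    unfolding \<Phi>_def by (intro continuous_intros fhat_cont[OF c sp])
  have \<Phi>m: "\<Phi> \<in> borel_measurable lborel" by (rule cont_meas_lborel[OF \<Phi>c])
  define F1 where "F1 = (\<integral>t. norm (f t) \<partial>lborel)"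
  have \<Phi>b: "\<Phi> x \<le> F1\<^sup>2" for x
    unfolding \<Phi>_def F1_def using fhat_bound[OF c sp, of x] by (intro power_mono) auto
  have \<Phi>0: "\<Phi> x \<ge> 0" for x unfolding \<Phi>_def by simp
  define fk where "fk k x = \<Phi> x * exp (-(pi*(sk k*x)\<^sup>2))" for k x
  have fki: "integrable lborel (fk k)" for k
  proof (rule Bochner_Integration.integrable_bound[where f="\<lambda>x. F1\<^sup>2 * exp (-(pi*(sk k*x)\<^sup>2))"])
    show "integrable lborel (\<lambda>x. F1\<^sup>2 * exp (-(pi*(sk k*x)\<^sup>2)))"
      using w_int[OF sk0[of k]] by simp
    show "fk k \<in> borel_measurable lborel"
      unfolding fk_def by (intro cont_meas_lborel continuous_intros \<Phi>c)
    show "AE x in lborel. norm (fk k x) \<le> norm (F1\<^sup>2 * exp (-(pi*(sk k*x)\<^sup>2)))"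
      using \<Phi>b \<Phi>0 by (intro AE_I2) (simp add: fk_def mult_right_mono)
  qed
  have fk_eq: "J 0 k = complex_of_real (integral\<^sup>L lborel (fk k))" for k
    unfolding J_def fk_def by (simp flip: integral_complex_of_real)
  have skl: "sk \<longlonglongrightarrow> 0" unfolding sk_def by (rule LIMSEQ_inverse_real_of_nat)
  have wl: "(\<lambda>k. exp (-(pi*(sk k*x)\<^sup>2))) \<longlonglongrightarrow> 1" for x
  proof -
    have "(\<lambda>k. exp (-(pi*(sk k*x)\<^sup>2))) \<longlonglongrightarrow> exp (-(pi*(0*x)\<^sup>2))"
      by (intro tendsto_intros skl)
    then show ?thesis by simp
  qed
  show int\<Phi>: "integrable lborel (\<lambda>x. (cmod (inv_fourier f x))\<^sup>2)"
    unfolding \<Phi>_def[symmetric]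
  proof (rule integrable_monotone_convergence[where f=fk and x="Re (?g 0)"])
    show "integrable lborel (fk k)" for k by (rule fki)
    show "AE x in lborel. mono (\<lambda>n. fk n x)"
    proof (rule AE_I2, rule monoI)
      fix x and m n :: nat assume mn: "m \<le> n"
      have "sk n \<le> sk m" unfolding sk_def using mn by (simp add: le_imp_inverse_le)
      then have "(sk n)\<^sup>2 \<le> (sk m)\<^sup>2" using sk0[of n] by (intro power_mono) auto
      then have "(sk n * x)\<^sup>2 \<le> (sk m * x)\<^sup>2"
        by (simp add: power_mult_distrib mult_right_mono)
      then have "exp (-(pi*(sk m*x)\<^sup>2)) \<le> exp (-(pi*(sk n*x)\<^sup>2))"
        by simp
      then show "fk m x \<le> fk n x" unfolding fk_def using \<Phi>0[of x] by (rule mult_left_mono)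
    qed
    show "AE x in lborel. (\<lambda>i. fk i x) \<longlonglongrightarrow> \<Phi> x"
    proof (rule AE_I2)
      fix x
      have "(\<lambda>i. fk i x) \<longlonglongrightarrow> \<Phi> x * 1" unfolding fk_def by (intro tendsto_intros wl)
      then show "(\<lambda>i. fk i x) \<longlonglongrightarrow> \<Phi> x" by simp
    qed
    show "(\<lambda>i. integral\<^sup>L lborel (fk i)) \<longlonglongrightarrow> Re (?g 0)"
    proof -
      have "(\<lambda>i. Re (J 0 i)) \<longlonglongrightarrow> Re (?g 0)" by (intro tendsto_intros Jlim)
      then show ?thesis by (simp add: fk_eq)
    qed
    show "\<Phi> \<in> borel_measurable lborel" by (rule \<Phi>m)
  qed
  have "(J a) \<longlonglongrightarrow> (\<integral>x. complex_of_real (\<Phi> x) * ee (-a*x) \<partial>lborel)"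
    unfolding J_def
  proof (rule integral_dominated_convergence[where w=\<Phi>])
    show "integrable lborel \<Phi>" using int\<Phi> unfolding \<Phi>_def .
    show "(\<lambda>x. complex_of_real (\<Phi> x) * ee (-a*x)) \<in> borel_measurable lborel"
      by (intro cont_meas_lborel continuous_intros \<Phi>c)
    show "(\<lambda>x. complex_of_real (\<Phi> x) * ee (-a*x) * complex_of_real (exp (-(pi*(sk k*x)\<^sup>2)))) \<in> borel_measurable lborel" for k
      by (intro cont_meas_lborel continuous_intros \<Phi>c)
    show "AE x in lborel. norm (complex_of_real (\<Phi> x) * ee (-a*x) * complex_of_real (exp (-(pi*(sk k*x)\<^sup>2)))) \<le> \<Phi> x" for k
      using \<Phi>0 by (intro AE_I2) (simp add: norm_mult mult_left_le)
    show "AE x in lborel. (\<lambda>k. complex_of_real (\<Phi> x) * ee (-a*x) * complex_of_real (exp (-(pi*(sk k*x)\<^sup>2)))) \<longlonglongrightarrow> complex_of_real (\<Phi> x) * ee (-a*x)"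
    proof (rule AE_I2)
      fix x
      have "(\<lambda>k. complex_of_real (\<Phi> x) * ee (-a*x) * complex_of_real (exp (-(pi*(sk k*x)\<^sup>2)))) \<longlonglongrightarrow> complex_of_real (\<Phi> x) * ee (-a*x) * complex_of_real 1"
        by (intro tendsto_intros wl)
      then show "(\<lambda>k. complex_of_real (\<Phi> x) * ee (-a*x) * complex_of_real (exp (-(pi*(sk k*x)\<^sup>2)))) \<longlonglongrightarrow> complex_of_real (\<Phi> x) * ee (-a*x)" by simp
    qed
  qed
  with Jlim[of a] show "(\<integral>x. complex_of_real ((cmod (inv_fourier f x))\<^sup>2) * ee (-a*x) \<partial>lborel) = conv_tilde f a"
    unfolding \<Phi>_def by (rule LIMSEQ_unique[rotated])
qed


lemma sp_int: "x \<in> signed_primes \<Longrightarrow> \<exists>z::int. x = of_int z \<and> prime (nat \<bar>z\<bar>)"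
  unfolding signed_primes_def
proof clarify
  fix p :: nat assume p: "prime p" "x = real p \<or> x = - real p"
  from p(2) consider "x = real p" | "x = - real p" by blast
  then show "\<exists>z::int. x = of_int z \<and> prime (nat \<bar>z\<bar>)"
  proof cases
    case 1 then show ?thesis using p(1) by (intro exI[of _ "int p"]) auto
  next
    case 2 then show ?thesis using p(1) by (intro exI[of _ "- int p"]) auto
  qed
qed

lemma sp_Ints: "x \<in> signed_primes \<Longrightarrow> x \<in> \<int>"
  using sp_int by (metis Ints_of_int)

lemma sp_of_int: "of_int z \<in> signed_primes \<Longrightarrow> prime (nat \<bar>z\<bar>)"
  using sp_int by (metis of_int_eq_iff)

lemma sp_3: "of_int z \<in> signed_primes \<Longrightarrow> (3::int) dvd z \<Longrightarrow> z = 3 \<or> z = -3"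
proof -
  assume a: "of_int z \<in> signed_primes" "(3::int) dvd z"
  have pr: "prime (nat \<bar>z\<bar>)" using sp_of_int[OF a(1)] .
  obtain k where k: "z = 3 * k" using a(2) by (elim dvdE)
  have "nat \<bar>z\<bar> = 3 * nat \<bar>k\<bar>" unfolding k by (simp add: abs_mult nat_mult_distrib)
  then have "prime (3 * nat \<bar>k\<bar>)" using pr by simp
  then have "nat \<bar>k\<bar> = 1" using prime_product[of 3 "nat \<bar>k\<bar>"] by simp
  then have "\<bar>k\<bar> = 1" by simp
  then show ?thesis unfolding k by (cases "k \<ge> 0") simp_all
qed

lemma pp_sp: "x \<in> prime_pairs d \<Longrightarrow> x \<in> signed_primes"
  unfolding prime_pairs_def by auto

lemma pp_partner: "x \<in> prime_pairs d \<Longrightarrow> x + real d \<in> prime_pairs d \<or> x - real d \<in> prime_pairs d"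
proof -
  assume "x \<in> prime_pairs d"
  then obtain p where p: "p \<in> signed_primes" "p + real d \<in> signed_primes" "x = p \<or> x = p + real d"
    unfolding prime_pairs_def by blast
  have "p + real d \<in> prime_pairs d" "p \<in> prime_pairs d"
    unfolding prime_pairs_def using p(1,2) by blast+
  then show ?thesis using p(3) by auto
qed

lemma pp_intro: "x \<in> signed_primes \<Longrightarrow> x + real d \<in> signed_primes \<Longrightarrow> x \<in> prime_pairs d \<and> x + real d \<in> prime_pairs d"
  unfolding prime_pairs_def by blast

lemma pp_Ints: "x \<in> prime_pairs d \<Longrightarrow> x \<in> \<int>"
  using pp_sp sp_Ints by blast

lemma triple_finite:
  assumes "\<not> 3 dvd d"
  shows "{x. x - real d \<in> signed_primes \<and> x \<in> signed_primes \<and> x + real d \<in> signed_primes}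
     \<subseteq> {3 - real d, 3, 3 + real d, -3 - real d, -3, -3 + real d}"
proof
  fix x assume x: "x \<in> {x. x - real d \<in> signed_primes \<and> x \<in> signed_primes \<and> x + real d \<in> signed_primes}"
  then obtain z :: int where z: "x = of_int z" using sp_int by blast
  have nd: "\<not> (3::int) dvd int d" using assms by presburger
  have "(3::int) dvd (z - int d) \<or> 3 dvd z \<or> 3 dvd (z + int d)" using nd by presburger
  moreover have "of_int (z - int d) \<in> signed_primes" "of_int z \<in> signed_primes" "of_int (z + int d) \<in> signed_primes"
    using x z by auto
  ultimately have "z - int d = 3 \<or> z - int d = -3 \<or> z = 3 \<or> z = -3 \<or> z + int d = 3 \<or> z + int d = -3"
    using sp_3 by blast
  then have "z = 3 + int d \<or> z = -3 + int d \<or> z = 3 \<or> z = -3 \<or> z = 3 - int d \<or> z = -3 - int d"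
    by linarith
  then show "x \<in> {3 - real d, 3, 3 + real d, -3 - real d, -3, -3 + real d}"
    unfolding z by (elim disjE; simp)
qed

definition Nd :: "real set \<Rightarrow> real \<Rightarrow> nat" where
  "Nd F a = card {(x, y) \<in> F \<times> F. x - y = a}"

lemma Nd_eq_B:
  assumes "finite F"
  shows "Nd F a = card {x \<in> F. x - a \<in> F}"
proof -
  have "bij_betw fst {(x, y) \<in> F \<times> F. x - y = a} {x \<in> F. x - a \<in> F}"
    by (rule bij_betw_byWitness[where f'="\<lambda>x. (x, x - a)"]) auto
  then show ?thesis unfolding Nd_def by (rule bij_betw_same_card)
qed

lemma Nd_eq_A:
  assumes "finite F"
  shows "Nd F a = card {y \<in> F. y + a \<in> F}"
proof -
  have "bij_betw snd {(x, y) \<in> F \<times> F. x - y = a} {y \<in> F. y + a \<in> F}"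
    by (rule bij_betw_byWitness[where f'="\<lambda>y. (y + a, y)"]) auto
  then show ?thesis unfolding Nd_def by (rule bij_betw_same_card)
qed

lemma count_upper:
  assumes F: "finite F" and T: "{x \<in> F. x - a \<in> F \<and> x + a \<in> F} \<subseteq> T" "finite T"
  shows "2 * Nd F a \<le> card F + card T"
proof -
  let ?A = "{y \<in> F. y + a \<in> F}" and ?B = "{x \<in> F. x - a \<in> F}"
  have "card ?A + card ?B = card (?A \<union> ?B) + card (?A \<inter> ?B)"
    by (rule card_Un_Int) (use F in auto)
  moreover have "card (?A \<union> ?B) \<le> card F" by (rule card_mono) (use F in auto)
  moreover have "card (?A \<inter> ?B) \<le> card T" by (rule card_mono) (use T in auto)
  ultimately show ?thesis using Nd_eq_A[OF F, of a] Nd_eq_B[OF F, of a] by linarith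
qed

lemma count_lower:
  assumes F: "finite F" and E: "F \<subseteq> {y \<in> F. y + a \<in> F} \<union> {x \<in> F. x - a \<in> F} \<union> E" "finite E"
  shows "card F \<le> 2 * Nd F a + card E"
proof -
  let ?A = "{y \<in> F. y + a \<in> F}" and ?B = "{x \<in> F. x - a \<in> F}"
  have "card F \<le> card (?A \<union> ?B \<union> E)" by (rule card_mono) (use F E in auto)
  also have "\<dots> \<le> card (?A \<union> ?B) + card E" by (rule card_Un_le)
  also have "card (?A \<union> ?B) \<le> card ?A + card ?B" by (rule card_Un_le)
  finally show ?thesis using Nd_eq_A[OF F, of a] Nd_eq_B[OF F, of a] by linarith
qed


lemma gammaF_sets[simp, measurable_cong]: "sets (gammaF F) = sets borel"
  unfolding gammaF_def by simp

lemma gammaF_space[simp]: "space (gammaF F) = UNIV"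
  using sets_eq_imp_space_eq[OF gammaF_sets] by simp

lemma gammaF_eq:
  assumes F: "finite F" "F \<noteq> {}"
  shows "gammaF F = distr (density (count_space (F \<times> F)) (\<lambda>_. ennreal (1 / real (card F)))) borel (\<lambda>(x, y). x - y)"
proof (rule measure_eqI)
  show "sets (gammaF F) = sets (distr (density (count_space (F \<times> F)) (\<lambda>_. ennreal (1 / real (card F)))) borel (\<lambda>(x, y). x - y))"
    by simp
  fix A assume A: "A \<in> sets (gammaF F)"
  have m: "(\<lambda>(x, y). x - y) \<in> measurable (count_space (F \<times> F)) borel" by simp
  have m2: "(\<lambda>(x, y). x - y) \<in> measurable (density (count_space (F \<times> F)) (\<lambda>_. ennreal (1 / real (card F)))) borel" by simp
  have fin: "finite ((\<lambda>(x, y). x - y) -` A \<inter> F \<times> F)" using F by auto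
  have "emeasure (gammaF F) A = ennreal (1 / real (card F)) * emeasure (count_space (F \<times> F)) ((\<lambda>(x, y). x - y) -` A \<inter> F \<times> F)"
    unfolding gammaF_def using F A m by (simp add: emeasure_distr)
  also have "\<dots> = emeasure (density (count_space (F \<times> F)) (\<lambda>_. ennreal (1 / real (card F)))) ((\<lambda>(x, y). x - y) -` A \<inter> F \<times> F)"
    by (subst emeasure_density) (auto simp: nn_integral_cmult_indicator)
  also have "\<dots> = emeasure (distr (density (count_space (F \<times> F)) (\<lambda>_. ennreal (1 / real (card F)))) borel (\<lambda>(x, y). x - y)) A"
    using A m2 by (simp add: emeasure_distr)
  finally show "emeasure (gammaF F) A = emeasure (distr (density (count_space (F \<times> F)) (\<lambda>_. ennreal (1 / real (card F)))) borel (\<lambda>(x, y). x - y)) A" .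
qed

lemma gammaF_integral:
  fixes g :: "real \<Rightarrow> 'b::{banach, second_countable_topology}"
  assumes F: "finite F" and g: "g \<in> borel_measurable borel"
  shows "integrable (gammaF F) g"
    and "integral\<^sup>L (gammaF F) g = (1 / real (card F)) *\<^sub>R (\<Sum>(x, y)\<in>F \<times> F. g (x - y))"
proof -
  have "integrable (gammaF F) g \<and> integral\<^sup>L (gammaF F) g = (1 / real (card F)) *\<^sub>R (\<Sum>(x, y)\<in>F \<times> F. g (x - y))"
  proof (cases "F = {}")
    case True
    then show ?thesis using g unfolding gammaF_def by simp
  next
    case False
    have m: "(\<lambda>(x, y). x - y) \<in> measurable (density (count_space (F \<times> F)) (\<lambda>_. ennreal (1 / real (card F)))) borel" by simp
    have gm: "(\<lambda>z. g ((\<lambda>(x, y). x - y) z)) \<in> borel_measurable (count_space (F \<times> F))" by simp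
    have i1: "integrable (gammaF F) g"
      unfolding gammaF_eq[OF F False]
      using g m gm F
      by (subst integrable_distr_eq) (auto simp: integrable_density integrable_count_space)
    have "integral\<^sup>L (gammaF F) g = (\<integral>z. g ((\<lambda>(x, y). x - y) z) \<partial>density (count_space (F \<times> F)) (\<lambda>_. ennreal (1 / real (card F))))"
      unfolding gammaF_eq[OF F False] using g m by (simp add: integral_distr)
    also have "\<dots> = (\<integral>z. (1 / real (card F)) *\<^sub>R g ((\<lambda>(x, y). x - y) z) \<partial>count_space (F \<times> F))"
      using gm by (subst integral_density) auto
    also have "\<dots> = (1 / real (card F)) *\<^sub>R (\<Sum>(x, y)\<in>F \<times> F. g (x - y))"
      using F by (simp add: lebesgue_integral_count_space_finite scaleR_sum_right case_prod_beta)
    finally show ?thesis using i1 by simp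
  qed
  then show "integrable (gammaF F) g" "integral\<^sup>L (gammaF F) g = (1 / real (card F)) *\<^sub>R (\<Sum>(x, y)\<in>F \<times> F. g (x - y))"
    by auto
qed

lemma gammaF_point:
  assumes F: "finite F"
  shows "measure (gammaF F) {a} = real (Nd F a) / real (card F)"
proof -
  have "measure (gammaF F) {a} = integral\<^sup>L (gammaF F) (indicator {a})" by simp
  also have "\<dots> = (1 / real (card F)) * (\<Sum>(x, y)\<in>F \<times> F. indicator {a} (x - y))"
    using gammaF_integral(2)[OF F, of "indicator {a} :: real \<Rightarrow> real"] by simp
  also have "(\<Sum>(x, y)\<in>F \<times> F. indicator {a} (x - y) :: real) = (\<Sum>z\<in>F \<times> F. if fst z - snd z = a then 1 else 0)"
    by (intro sum.cong refl) (auto simp: indicator_def)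
  also have "\<dots> = real (Nd F a)"
  proof -
    have e: "{z \<in> F \<times> F. fst z - snd z = a} = {(x, y) \<in> F \<times> F. x - y = a}" by auto
    show ?thesis unfolding Nd_def e[symmetric] using F by (simp add: sum.If_cases Int_def)
  qed
  finally show ?thesis by simp
qed

lemma gammaF_radon:
  assumes F: "finite F"
  shows "radon_measure (gammaF F)"
  unfolding radon_measure_def
proof (intro conjI allI impI)
  fix K :: "real set" assume "compact K"
  show "emeasure (gammaF F) K < \<infinity>"
  proof (cases "F = {}")
    case True then show ?thesis unfolding gammaF_def by simp
  next
    case False
    have "emeasure (gammaF F) K \<le> emeasure (gammaF F) UNIV"
      by (rule emeasure_mono) auto
    also have "\<dots> = ennreal (1 / real (card F)) * emeasure (count_space (F \<times> F)) (F \<times> F)"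
      unfolding gammaF_def using False by (simp add: emeasure_distr)
    also have "\<dots> < \<infinity>" using F by (simp add: ennreal_mult_less_top of_nat_less_top)
    finally show ?thesis .
  qed
qed simp


definition tent :: "real \<Rightarrow> real \<Rightarrow> real" where
  "tent c x = max 0 (1 - \<bar>x\<bar> / c)"

lemma tent_nonneg: "tent c x \<ge> 0" unfolding tent_def by simp

lemma tent_le1: "c > 0 \<Longrightarrow> tent c x \<le> 1" unfolding tent_def by simp

lemma tent_cont: "continuous_on UNIV (tent c)"
  unfolding tent_def[abs_def] divide_inverse by (intro continuous_intros)

lemma tent_zero: "c > 0 \<Longrightarrow> \<bar>x\<bar> \<ge> c \<Longrightarrow> tent c x = 0"
  unfolding tent_def by (simp add: field_simps)

lemma tent_supp: "c > 0 \<Longrightarrow> tent c x \<noteq> 0 \<Longrightarrow> \<bar>x\<bar> \<le> c"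
  using tent_zero by force

lemma tent_hcs: "c > 0 \<Longrightarrow> has_compact_support (tent c)"
  unfolding hcs_iff
proof -
  assume c: "c > 0"
  have "{x. tent c x \<noteq> 0} \<subseteq> cball 0 c"
  proof
    fix x assume "x \<in> {x. tent c x \<noteq> 0}"
    then show "x \<in> cball 0 c" using tent_supp[OF c, of x] by simp
  qed
  then show "bounded {x. tent c x \<noteq> 0}" using bounded_cball bounded_subset by blast
qed

definition fT :: "nat \<Rightarrow> real \<Rightarrow> complex" where
  "fT d t = complex_of_real (tent (real d + 1) t)"

definition GT :: "nat \<Rightarrow> real \<Rightarrow> real" where
  "GT d y = (\<integral>t. tent (real d + 1) t * tent (real d + 1) (t - y) \<partial>lborel)"

lemma fT_cont: "continuous_on UNIV (fT d)"
  unfolding fT_def[abs_def] by (intro continuous_intros continuous_on_compose2[OF tent_cont]) auto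

lemma fT_hcs: "has_compact_support (fT d)"
proof -
  have "has_compact_support (tent (real d + 1))" by (rule tent_hcs) simp
  then show ?thesis unfolding hcs_iff fT_def by simp
qed

lemma conv_fT: "conv_tilde (fT d) = (\<lambda>y. complex_of_real (GT d y))"
proof
  fix y
  have "(\<lambda>t. fT d t * cnj (fT d (t - y))) = (\<lambda>t. complex_of_real (tent (real d + 1) t * tent (real d + 1) (t - y)))"
    unfolding fT_def by simp
  then show "conv_tilde (fT d) y = complex_of_real (GT d y)"
    unfolding conv_tilde_def GT_def by (simp only: integral_complex_of_real)
qed

lemma GT_cont: "continuous_on UNIV (GT d)"
proof -
  have "continuous_on UNIV (\<lambda>y. Re (conv_tilde (fT d) y))"
    by (intro continuous_intros g_cont fT_cont fT_hcs)
  then show ?thesis unfolding conv_fT by simp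
qed

lemma GT_hcs: "has_compact_support (GT d)"
proof -
  have "has_compact_support (conv_tilde (fT d))" by (rule g_hcs[OF fT_cont fT_hcs])
  then show ?thesis unfolding conv_fT hcs_iff by simp
qed

lemma GT_nonneg: "GT d y \<ge> 0"
  unfolding GT_def by (intro integral_nonneg_AE AE_I2 mult_nonneg_nonneg tent_nonneg)

lemma GT_pos: "d \<ge> 1 \<Longrightarrow> GT d (real d) > 0"
proof -
  assume d: "d \<ge> 1"
  define c where "c = real d + 1"
  have c: "c > 0" unfolding c_def by simp
  have "(\<integral>t. indicator {0..real d} t * (1 / c)\<^sup>2 \<partial>lborel) \<le> GT d (real d)"
    unfolding GT_def c_def[symmetric]
  proof (rule integral_mono)
    show "integrable lborel (\<lambda>t. indicator {0..real d} t * (1 / c)\<^sup>2)" by simp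
    have "continuous_on UNIV (\<lambda>t. tent c t * tent c (t - real d))"
      by (intro continuous_intros continuous_on_compose2[OF tent_cont]) auto
    moreover have "has_compact_support (\<lambda>t. tent c t * tent c (t - real d))"
    proof -
      have "{t. tent c t * tent c (t - real d) \<noteq> 0} \<subseteq> cball 0 c"
      proof
        fix t assume "t \<in> {t. tent c t * tent c (t - real d) \<noteq> 0}"
        then have "tent c t \<noteq> 0" by auto
        then show "t \<in> cball 0 c" using tent_supp[OF c, of t] by simp
      qed
      then show ?thesis unfolding hcs_iff using bounded_cball bounded_subset by blast
    qed
    ultimately show "integrable lborel (\<lambda>t. tent c t * tent c (t - real d))"
      by (rule cs_integrable)
    fix t
    show "indicator {0..real d} t * (1 / c)\<^sup>2 \<le> tent c t * tent c (t - real d)"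
    proof (cases "t \<in> {0..real d}")
      case True
      then have t: "0 \<le> t" "t \<le> real d" by auto
      have "1 / c \<le> tent c t" unfolding tent_def using t c
        by (simp add: field_simps c_def)
      moreover have "1 / c \<le> tent c (t - real d)" unfolding tent_def using t c
        by (simp add: field_simps c_def)
      ultimately have "1 / c * (1 / c) \<le> tent c t * tent c (t - real d)"
        by (intro mult_mono) (use c tent_nonneg in auto)
      then show ?thesis using True by (simp add: power2_eq_square)
    next
      case False
      then show ?thesis by (simp add: tent_nonneg)
    qed
  qed
  moreover have "(\<integral>t. indicator {0..real d} t * (1 / c)\<^sup>2 \<partial>lborel) = real d * (1 / c)\<^sup>2"
    by simp
  moreover have "real d * (1 / c)\<^sup>2 > 0" using d c by simp
  ultimately show ?thesis by linarith
qed


definition hP :: "real set \<Rightarrow> real \<Rightarrow> complex" where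
  "hP P x = (1 / of_nat (card P)) * (\<Sum>(p, q)\<in>P \<times> P. exp (2 * pi * \<i> * complex_of_real ((p - q) * x)))"

lemma sum_pairs_swap:
  assumes "finite P"
  shows "(\<Sum>(p, q)\<in>P \<times> P. u (p - q)) = (\<Sum>(p, q)\<in>P \<times> P. u (q - p))"
proof -
  have "(\<Sum>(p, q)\<in>P \<times> P. u (p - q)) = (\<Sum>p\<in>P. \<Sum>q\<in>P. u (p - q))"
    by (rule sum.cartesian_product[symmetric])
  also have "\<dots> = (\<Sum>q\<in>P. \<Sum>p\<in>P. u (p - q))" by (rule sum.swap)
  also have "\<dots> = (\<Sum>(q, p)\<in>P \<times> P. u (p - q))" by (rule sum.cartesian_product)
  finally show ?thesis .
qed

lemma ee_diff: "ee ((p - q) * x) = ee (p * x) * cnj (ee (q * x))"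
proof -
  have e1: "(p - q) * x = p * x + - (q * x)" by (simp add: algebra_simps)
  show ?thesis by (simp only: e1 ee_add[symmetric] ee_cnj)
qed

lemma hP_eq:
  assumes "finite P"
  shows "hP P x = complex_of_real ((cmod (\<Sum>p\<in>P. ee (p * x)))\<^sup>2 / real (card P))"
proof -
  have "(\<Sum>(p, q)\<in>P \<times> P. ee ((p - q) * x)) = (\<Sum>p\<in>P. \<Sum>q\<in>P. ee (p * x) * cnj (ee (q * x)))"
    by (simp only: ee_diff sum.cartesian_product)
  also have "\<dots> = (\<Sum>p\<in>P. ee (p * x)) * cnj (\<Sum>q\<in>P. ee (q * x))"
    by (simp add: sum_product cnj_sum)
  also have "\<dots> = complex_of_real ((cmod (\<Sum>p\<in>P. ee (p * x)))\<^sup>2)"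
    by (rule complex_norm_square[symmetric])
  finally show ?thesis unfolding hP_def by simp
qed

lemma hP_Im: "finite P \<Longrightarrow> Im (hP P x) = 0"
  by (simp add: hP_eq)

lemma hP_Re_nonneg: "finite P \<Longrightarrow> Re (hP P x) \<ge> 0"
  by (simp add: hP_eq)

lemma hP_Re_le:
  assumes "finite P"
  shows "Re (hP P x) \<le> real (card P)"
proof (cases "P = {}")
  case True then show ?thesis by (simp add: hP_def)
next
  case False
  then have N: "real (card P) > 0" using assms by (simp add: card_gt_0_iff)
  have "cmod (\<Sum>p\<in>P. ee (p * x)) \<le> (\<Sum>p\<in>P. cmod (ee (p * x)))" by (rule norm_sum)
  also have "\<dots> = real (card P)" by simp
  finally have "(cmod (\<Sum>p\<in>P. ee (p * x)))\<^sup>2 \<le> (real (card P))\<^sup>2"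
    by (intro power_mono) auto
  then have "(cmod (\<Sum>p\<in>P. ee (p * x)))\<^sup>2 / real (card P) \<le> (real (card P))\<^sup>2 / real (card P)"
    using N by (intro divide_right_mono) auto
  also have "\<dots> = real (card P)" using N by (simp add: power2_eq_square)
  finally show ?thesis using assms by (simp add: hP_eq)
qed

lemma hP_Re_sum:
  assumes "finite P"
  shows "Re (hP P x) = (1 / real (card P)) * (\<Sum>(p, q)\<in>P \<times> P. Re (ee ((p - q) * x)))"
  unfolding hP_def by (simp add: Re_sum case_prod_beta)

lemma hP_cont: "continuous_on UNIV (\<lambda>x. Re (hP P x))"
  unfolding hP_def[abs_def] case_prod_beta by (intro continuous_intros)

lemma Re_ee_neg: "Re (ee (- u)) = Re (ee u)"
proof -
  have "Re (ee (- u)) = Re (cnj (ee u))" by (simp only: ee_cnj)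
  also have "\<dots> = Re (ee u)" by (rule cnj.sel(1))
  finally show ?thesis .
qed

lemma g_cnj:
  assumes c: "continuous_on UNIV f" and sp: "has_compact_support f"
  shows "conv_tilde f (- a) = cnj (conv_tilde f a)"
proof -
  have "conv_tilde f (- a) = (\<integral>x. complex_of_real ((cmod (inv_fourier f x))\<^sup>2) * ee (- (-a) * x) \<partial>lborel)"
    by (rule inversion(2)[OF c sp, symmetric])
  also have "\<dots> = (\<integral>x. cnj (complex_of_real ((cmod (inv_fourier f x))\<^sup>2) * ee (-a * x)) \<partial>lborel)"
  proof (intro Bochner_Integration.integral_cong refl)
    fix x
    have e: "- (-a) * x = - (-a * x)" by simp
    show "complex_of_real ((cmod (inv_fourier f x))\<^sup>2) * ee (- (-a) * x) = cnj (complex_of_real ((cmod (inv_fourier f x))\<^sup>2) * ee (-a * x))"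
      by (simp only: e complex_cnj_mult complex_cnj_complex_of_real ee_cnj)
  qed
  also have "\<dots> = cnj (conv_tilde f a)"
    by (simp only: Bochner_Integration.integral_cnj inversion(2)[OF c sp])
  finally show ?thesis .
qed

lemma Re_g:
  assumes c: "continuous_on UNIV f" and sp: "has_compact_support f"
  shows "Re (conv_tilde f a) = (\<integral>x. (cmod (inv_fourier f x))\<^sup>2 * Re (ee (a * x)) \<partial>lborel)"
    and "integrable lborel (\<lambda>x. (cmod (inv_fourier f x))\<^sup>2 * Re (ee (a * x)))"
proof -
  have \<Phi>c: "continuous_on UNIV (\<lambda>x. (cmod (inv_fourier f x))\<^sup>2)"
    by (intro continuous_intros fhat_cont[OF c sp])
  have i: "integrable lborel (\<lambda>x. complex_of_real ((cmod (inv_fourier f x))\<^sup>2) * ee (-a * x))"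
  proof (rule Bochner_Integration.integrable_bound[OF inversion(1)[OF c sp]])
    show "(\<lambda>x. complex_of_real ((cmod (inv_fourier f x))\<^sup>2) * ee (-a * x)) \<in> borel_measurable lborel"
      by (intro cont_meas_lborel continuous_intros \<Phi>c)
    show "AE x in lborel. norm (complex_of_real ((cmod (inv_fourier f x))\<^sup>2) * ee (-a * x)) \<le> norm ((cmod (inv_fourier f x))\<^sup>2)"
      by (intro AE_I2) (simp add: norm_mult norm_power)
  qed
  have e: "Re (complex_of_real ((cmod (inv_fourier f x))\<^sup>2) * ee (-a * x)) = (cmod (inv_fourier f x))\<^sup>2 * Re (ee (a * x))" for x
  proof -
    have "Re (ee (-a * x)) = Re (ee (a * x))" using Re_ee_neg[of "a * x"] by simp
    then show ?thesis by simp
  qed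
  have "Re (conv_tilde f a) = Re (\<integral>x. complex_of_real ((cmod (inv_fourier f x))\<^sup>2) * ee (-a * x) \<partial>lborel)"
    by (simp only: inversion(2)[OF c sp])
  also have "\<dots> = (\<integral>x. Re (complex_of_real ((cmod (inv_fourier f x))\<^sup>2) * ee (-a * x)) \<partial>lborel)"
    by (rule integral_Re[OF i, symmetric])
  also have "\<dots> = (\<integral>x. (cmod (inv_fourier f x))\<^sup>2 * Re (ee (a * x)) \<partial>lborel)"
    by (simp only: e)
  finally show "Re (conv_tilde f a) = (\<integral>x. (cmod (inv_fourier f x))\<^sup>2 * Re (ee (a * x)) \<partial>lborel)" .
  have "integrable lborel (\<lambda>x. Re (complex_of_real ((cmod (inv_fourier f x))\<^sup>2) * ee (-a * x)))"
    by (rule integrable_bounded_linear[OF bounded_linear_Re i])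
  then show "integrable lborel (\<lambda>x. (cmod (inv_fourier f x))\<^sup>2 * Re (ee (a * x)))"
    by (simp only: e)
qed


lemma FT_a:
  assumes P: "finite P" "P \<noteq> {}"
  shows "is_fourier_transform (gammaF P) (density lborel (\<lambda>x. ennreal (Re (hP P x))))"
  unfolding is_fourier_transform_def
proof (intro conjI allI impI)
  define N where "N = real (card P)"
  have N: "N > 0" unfolding N_def using P by (simp add: card_gt_0_iff)
  have hm[measurable]: "(\<lambda>x. Re (hP P x)) \<in> borel_measurable lborel"
    by (rule cont_meas_lborel[OF hP_cont])
  have hm2: "(\<lambda>x. Re (hP P x)) \<in> borel_measurable borel" using hm by simp
  have h0: "Re (hP P x) \<ge> 0" for x by (rule hP_Re_nonneg[OF P(1)])
  have hN: "Re (hP P x) \<le> N" for x unfolding N_def by (rule hP_Re_le[OF P(1)])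
  show "radon_measure (density lborel (\<lambda>x. ennreal (Re (hP P x))))"
    unfolding radon_measure_def
  proof (intro conjI allI impI)
    show "sets (density lborel (\<lambda>x. ennreal (Re (hP P x)))) = sets borel" by simp
    fix K :: "real set" assume K: "compact K"
    have Ks: "K \<in> sets lborel" using compact_imp_closed[OF K] by simp
    have "emeasure (density lborel (\<lambda>x. ennreal (Re (hP P x)))) K = (\<integral>\<^sup>+x. ennreal (Re (hP P x)) * indicator K x \<partial>lborel)"
      using Ks by (subst emeasure_density) auto
    also have "\<dots> \<le> (\<integral>\<^sup>+x. ennreal N * indicator K x \<partial>lborel)"
      by (intro nn_integral_mono) (auto simp: indicator_def hN ennreal_leI)
    also have "\<dots> = ennreal N * emeasure lborel K"
      using Ks by (rule nn_integral_cmult_indicator)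
    also have "\<dots> < \<infinity>"
      using emeasure_bounded_finite[OF compact_imp_bounded[OF K]] by (simp add: ennreal_mult_less_top)
    finally show "emeasure (density lborel (\<lambda>x. ennreal (Re (hP P x)))) K < \<infinity>" .
  qed
  fix f :: "real \<Rightarrow> complex"
  assume "continuous_on UNIV f \<and> has_compact_support f"
  then have c: "continuous_on UNIV f" and sp: "has_compact_support f" by auto
  define \<Phi> where "\<Phi> x = (cmod (inv_fourier f x))\<^sup>2" for x
  have \<Phi>i: "integrable lborel \<Phi>" unfolding \<Phi>_def by (rule inversion(1)[OF c sp])
  have \<Phi>c: "continuous_on UNIV \<Phi>" unfolding \<Phi>_def by (intro continuous_intros fhat_cont[OF c sp])
  have \<Phi>m: "\<Phi> \<in> borel_measurable lborel" by (rule cont_meas_lborel[OF \<Phi>c])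
  have \<Phi>0: "\<Phi> x \<ge> 0" for x unfolding \<Phi>_def by simp
  have hi: "integrable lborel (\<lambda>x. Re (hP P x) *\<^sub>R \<Phi> x)"
  proof (rule Bochner_Integration.integrable_bound[where f="\<lambda>x. N * \<Phi> x"])
    show "integrable lborel (\<lambda>x. N * \<Phi> x)" using \<Phi>i by simp
    show "(\<lambda>x. Re (hP P x) *\<^sub>R \<Phi> x) \<in> borel_measurable lborel"
      by (intro cont_meas_lborel continuous_intros hP_cont \<Phi>c)
    show "AE x in lborel. norm (Re (hP P x) *\<^sub>R \<Phi> x) \<le> norm (N * \<Phi> x)"
      using h0 hN \<Phi>0 N by (intro AE_I2) (simp add: abs_mult mult_right_mono)
  qed
  show "integrable (density lborel (\<lambda>x. ennreal (Re (hP P x)))) (\<lambda>x. (cmod (inv_fourier f x))\<^sup>2)"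
    unfolding \<Phi>_def[symmetric] using hi \<Phi>m h0 by (subst integrable_density) auto
  have gm: "conv_tilde f \<in> borel_measurable borel" by (rule cont_meas[OF g_cont[OF c sp]])
  show "integrable (gammaF P) (conv_tilde f)" by (rule gammaF_integral(1)[OF P(1) gm])
  let ?S = "\<Sum>(p, q)\<in>P \<times> P. conv_tilde f (p - q)"
  have L: "(\<integral>x. conv_tilde f x \<partial>gammaF P) = (1 / N) *\<^sub>R ?S"
    unfolding N_def by (rule gammaF_integral(2)[OF P(1) gm])
  have "(\<Sum>(p, q)\<in>P \<times> P. Im (conv_tilde f (p - q))) = (\<Sum>(p, q)\<in>P \<times> P. Im (conv_tilde f (q - p)))"
    by (rule sum_pairs_swap[OF P(1)])
  also have "\<dots> = (\<Sum>(p, q)\<in>P \<times> P. - Im (conv_tilde f (p - q)))"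
  proof (intro sum.cong refl, clarify)
    fix p q
    have "conv_tilde f (q - p) = conv_tilde f (- (p - q))" by simp
    also have "\<dots> = cnj (conv_tilde f (p - q))" by (rule g_cnj[OF c sp])
    finally show "Im (conv_tilde f (q - p)) = - Im (conv_tilde f (p - q))" by simp
  qed
  also have "\<dots> = - (\<Sum>(p, q)\<in>P \<times> P. Im (conv_tilde f (p - q)))"
    by (simp add: sum_negf case_prod_beta)
  finally have "(\<Sum>(p, q)\<in>P \<times> P. Im (conv_tilde f (p - q))) = 0" by simp
  then have ImS: "Im ?S = 0" by (simp add: Im_sum case_prod_beta)
  have ReS: "Re ?S = (\<Sum>(p, q)\<in>P \<times> P. \<integral>x. \<Phi> x * Re (ee ((p - q) * x)) \<partial>lborel)"
    unfolding Re_sum \<Phi>_def by (intro sum.cong refl) (auto simp: Re_g(1)[OF c sp])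
  have "(\<integral>x. \<Phi> x \<partial>density lborel (\<lambda>x. ennreal (Re (hP P x))))
      = (\<integral>x. Re (hP P x) *\<^sub>R \<Phi> x \<partial>lborel)"
    using \<Phi>m h0 by (subst integral_density) auto
  also have "\<dots> = (\<integral>x. (1 / N) * (\<Sum>(p, q)\<in>P \<times> P. \<Phi> x * Re (ee ((p - q) * x))) \<partial>lborel)"
    unfolding hP_Re_sum[OF P(1)] N_def
    by (intro Bochner_Integration.integral_cong refl) (simp add: sum_distrib_left sum_distrib_right case_prod_beta mult_ac)
  also have "\<dots> = (1 / N) * (\<Sum>(p, q)\<in>P \<times> P. \<integral>x. \<Phi> x * Re (ee ((p - q) * x)) \<partial>lborel)"
  proof -
    have "(\<integral>x. (\<Sum>z\<in>P \<times> P. \<Phi> x * Re (ee ((fst z - snd z) * x))) \<partial>lborel)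
        = (\<Sum>z\<in>P \<times> P. \<integral>x. \<Phi> x * Re (ee ((fst z - snd z) * x)) \<partial>lborel)"
      by (rule Bochner_Integration.integral_sum) (unfold \<Phi>_def, rule Re_g(2)[OF c sp])
    then show ?thesis by (simp add: case_prod_beta)
  qed
  finally have R: "(\<integral>x. \<Phi> x \<partial>density lborel (\<lambda>x. ennreal (Re (hP P x)))) = (1 / N) * Re ?S"
    unfolding ReS .
  have "?S = complex_of_real (Re ?S)" using ImS by (simp add: complex_eq_iff)
  then show "(\<integral>x. conv_tilde f x \<partial>gammaF P)
      = complex_of_real (\<integral>x. (cmod (inv_fourier f x))\<^sup>2 \<partial>density lborel (\<lambda>x. ennreal (Re (hP P x))))"
    unfolding L \<Phi>_def[symmetric] R by (metis of_real_mult scaleR_conv_of_real)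
qed


lemma key_ineq:
  assumes F: "finite F" and h: "\<And>u. h u \<ge> (0::real)" and a: "a \<noteq> 0"
  shows "(\<Sum>(x, y)\<in>F \<times> F. h (x - y)) \<ge> real (card F) * h 0 + real (Nd F a) * h a"
proof -
  let ?S0 = "{(x, y) \<in> F \<times> F. x - y = 0}" and ?Sa = "{(x, y) \<in> F \<times> F. x - y = a}"
  have fin: "finite ?S0" "finite ?Sa" using F by (auto intro: finite_subset[of _ "F \<times> F"])
  have dis: "?S0 \<inter> ?Sa = {}" using a by auto
  have "(\<Sum>(x, y)\<in>?S0 \<union> ?Sa. h (x - y)) \<le> (\<Sum>(x, y)\<in>F \<times> F. h (x - y))"
    by (rule sum_mono2) (use F h in \<open>auto simp: case_prod_beta\<close>)
  moreover have "(\<Sum>(x, y)\<in>?S0 \<union> ?Sa. h (x - y)) = (\<Sum>(x, y)\<in>?S0. h (x - y)) + (\<Sum>(x, y)\<in>?Sa. h (x - y))"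
    by (rule sum.union_disjoint[OF fin dis])
  moreover have "(\<Sum>(x, y)\<in>?S0. h (x - y)) = (\<Sum>z\<in>?S0. h 0)"
    by (intro sum.cong refl) auto
  moreover have "(\<Sum>(x, y)\<in>?Sa. h (x - y)) = (\<Sum>z\<in>?Sa. h a)"
    by (intro sum.cong refl) auto
  moreover have "card ?S0 = card F"
    using Nd_eq_B[OF F, of 0] unfolding Nd_def by simp
  ultimately show ?thesis unfolding Nd_def by simp
qed

lemma pa_comb:
  assumes P: "finite (prime_pairs d)"
  shows "2 * Nd (prime_pairs d) (real d) = card (prime_pairs d) +
           card {x \<in> prime_pairs d. x + real d \<in> prime_pairs d \<and> x - real d \<in> prime_pairs d}"
    and "{x \<in> prime_pairs d. x + real d \<in> prime_pairs d \<and> x - real d \<in> prime_pairs d} = {} \<longleftrightarrow>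
         \<not> (\<exists>p. p \<in> signed_primes \<and> p + real d \<in> signed_primes \<and> p + 2 * real d \<in> signed_primes)"
proof -
  let ?P = "prime_pairs d"
  let ?A = "{y \<in> ?P. y + real d \<in> ?P}" and ?B = "{x \<in> ?P. x - real d \<in> ?P}"
  have U: "?A \<union> ?B = ?P" using pp_partner by blast
  have "card ?A + card ?B = card (?A \<union> ?B) + card (?A \<inter> ?B)"
    by (rule card_Un_Int) (use P in auto)
  moreover have "?A \<inter> ?B = {x \<in> ?P. x + real d \<in> ?P \<and> x - real d \<in> ?P}" by auto
  ultimately show "2 * Nd ?P (real d) = card ?P + card {x \<in> ?P. x + real d \<in> ?P \<and> x - real d \<in> ?P}"
    using Nd_eq_A[OF P, of "real d"] Nd_eq_B[OF P, of "real d"] U by simp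
  show "{x \<in> ?P. x + real d \<in> ?P \<and> x - real d \<in> ?P} = {} \<longleftrightarrow>
         \<not> (\<exists>p. p \<in> signed_primes \<and> p + real d \<in> signed_primes \<and> p + 2 * real d \<in> signed_primes)"
  proof
    assume e: "{x \<in> ?P. x + real d \<in> ?P \<and> x - real d \<in> ?P} = {}"
    show "\<not> (\<exists>p. p \<in> signed_primes \<and> p + real d \<in> signed_primes \<and> p + 2 * real d \<in> signed_primes)"
    proof
      assume "\<exists>p. p \<in> signed_primes \<and> p + real d \<in> signed_primes \<and> p + 2 * real d \<in> signed_primes"
      then obtain p where p: "p \<in> signed_primes" "p + real d \<in> signed_primes" "p + 2 * real d \<in> signed_primes" by blast
      have "p \<in> ?P" "p + real d \<in> ?P" using pp_intro[OF p(1,2)] by auto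
      moreover have "p + real d + real d \<in> ?P" using pp_intro[of "p + real d" d] p(2,3) by (simp add: algebra_simps)
      ultimately have "p + real d \<in> {x \<in> ?P. x + real d \<in> ?P \<and> x - real d \<in> ?P}" by simp
      then show False using e by blast
    qed
  next
    assume n: "\<not> (\<exists>p. p \<in> signed_primes \<and> p + real d \<in> signed_primes \<and> p + 2 * real d \<in> signed_primes)"
    show "{x \<in> ?P. x + real d \<in> ?P \<and> x - real d \<in> ?P} = {}"
    proof (rule ccontr)
      assume "{x \<in> ?P. x + real d \<in> ?P \<and> x - real d \<in> ?P} \<noteq> {}"
      then obtain x where x: "x \<in> ?P" "x + real d \<in> ?P" "x - real d \<in> ?P" by blast
      have "x - real d \<in> signed_primes" "x - real d + real d \<in> signed_primes" "x - real d + 2 * real d \<in> signed_primes"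
        using pp_sp x by (auto simp: algebra_simps)
      then show False using n by blast
    qed
  qed
qed

lemma dirac_return: "dirac a = return borel a"
  unfolding dirac_def return_def by simp

lemma measure_dirac: "measure (dirac a) {b} = indicator {b} a"
  unfolding dirac_return by (simp add: measure_return)

lemma pa_vague:
  assumes P: "finite P" and f: "continuous_on UNIV f" "has_compact_support f"
  shows "(\<lambda>n. integral\<^sup>L (gammaF (P \<inter> {- real n..real n})) f) \<longlonglongrightarrow> integral\<^sup>L (gammaF P) f"
proof (rule tendsto_eventually)
  obtain B where B: "\<forall>x\<in>P. norm x \<le> B" using finite_imp_bounded[OF P] bounded_iff by blast
  show "\<forall>\<^sub>F n in sequentially. integral\<^sup>L (gammaF (P \<inter> {- real n..real n})) f = integral\<^sup>L (gammaF P) f"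
    unfolding eventually_sequentially
  proof (intro exI allI impI)
    fix n assume n: "nat \<lceil>B\<rceil> \<le> n"
    then have "B \<le> real n" by linarith
    then have "P \<inter> {- real n..real n} = P" using B by (force simp: abs_le_iff)
    then show "integral\<^sup>L (gammaF (P \<inter> {- real n..real n})) f = integral\<^sup>L (gammaF P) f" by simp
  qed
qed


lemma pp_trunc_finite: "finite (prime_pairs d \<inter> {- R..R})"
proof (rule finite_subset[of _ "real_of_int ` {\<lfloor>-R\<rfloor>..\<lceil>R\<rceil>}"])
  show "prime_pairs d \<inter> {- R..R} \<subseteq> real_of_int ` {\<lfloor>-R\<rfloor>..\<lceil>R\<rceil>}"
  proof
    fix x assume x: "x \<in> prime_pairs d \<inter> {- R..R}"
    then obtain z where z: "x = of_int z" using pp_Ints Ints_cases by blast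
    have "\<lfloor>-R\<rfloor> \<le> z" "z \<le> \<lceil>R\<rceil>" using x unfolding z by (auto simp: floor_le_iff le_ceiling_iff)
    then show "x \<in> real_of_int ` {\<lfloor>-R\<rfloor>..\<lceil>R\<rceil>}" unfolding z by auto
  qed
qed simp

lemma card_trunc_top:
  assumes inf: "infinite (prime_pairs d)" and r: "strict_mono r"
  shows "filterlim (\<lambda>n. real (card (prime_pairs d \<inter> {- real (r n)..real (r n)}))) at_top sequentially"
  unfolding filterlim_at_top
proof
  fix Z :: real
  obtain S where S: "finite S" "card S = nat \<lceil>Z\<rceil>" "S \<subseteq> prime_pairs d"
    using infinite_arbitrarily_large[OF inf] by blast
  obtain B where B: "\<forall>x\<in>S. norm x \<le> B" using finite_imp_bounded[OF S(1)] bounded_iff by blast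
  show "\<forall>\<^sub>F n in sequentially. Z \<le> real (card (prime_pairs d \<inter> {- real (r n)..real (r n)}))"
    unfolding eventually_sequentially
  proof (intro exI allI impI)
    fix n assume n: "nat \<lceil>B\<rceil> \<le> n"
    have "n \<le> r n" by (rule seq_suble[OF r])
    then have "B \<le> real (r n)" using n by linarith
    then have "S \<subseteq> prime_pairs d \<inter> {- real (r n)..real (r n)}" using B S(3) by (force simp: abs_le_iff)
    then have "card S \<le> card (prime_pairs d \<inter> {- real (r n)..real (r n)})"
      by (rule card_mono[OF pp_trunc_finite])
    then show "Z \<le> real (card (prime_pairs d \<inter> {- real (r n)..real (r n)}))"
      using S(2) by linarith
  qed
qed

lemma boundary_card:
  assumes d: "d \<ge> 1"
  shows "card {x \<in> prime_pairs d \<inter> {- real R..real R}. real R - real d < \<bar>x\<bar>} \<le> 2 * d"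
proof -
  let ?E = "{x \<in> prime_pairs d \<inter> {- real R..real R}. real R - real d < \<bar>x\<bar>}"
  let ?I = "{int R - int d + 1..int R} \<union> {- int R..- int R + int d - 1}"
  have "?E \<subseteq> real_of_int ` ?I"
  proof
    fix x assume x: "x \<in> ?E"
    then obtain z where z: "x = of_int z" using pp_Ints Ints_cases by blast
    have "real R - real d < \<bar>real_of_int z\<bar>" "\<bar>real_of_int z\<bar> \<le> real R" using x unfolding z by auto
    then have "int R - int d < \<bar>z\<bar>" "\<bar>z\<bar> \<le> int R" by linarith+
    then have "z \<in> ?I" by auto
    then show "x \<in> real_of_int ` ?I" unfolding z by auto
  qed
  then have "card ?E \<le> card (real_of_int ` ?I)" by (intro card_mono) auto
  also have "\<dots> \<le> card ?I" by (rule card_image_le) simp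
  also have "\<dots> \<le> card {int R - int d + 1..int R} + card {- int R..- int R + int d - 1}" by (rule card_Un_le)
  also have "\<dots> = 2 * d" by simp
  finally show ?thesis .
qed

lemma trunc_cover:
  "prime_pairs d \<inter> {- real R..real R} \<subseteq>
     {y \<in> prime_pairs d \<inter> {- real R..real R}. y + real d \<in> prime_pairs d \<inter> {- real R..real R}} \<union>
     {x \<in> prime_pairs d \<inter> {- real R..real R}. x - real d \<in> prime_pairs d \<inter> {- real R..real R}} \<union>
     {x \<in> prime_pairs d \<inter> {- real R..real R}. real R - real d < \<bar>x\<bar>}"
proof
  fix x assume x: "x \<in> prime_pairs d \<inter> {- real R..real R}"
  show "x \<in> {y \<in> prime_pairs d \<inter> {- real R..real R}. y + real d \<in> prime_pairs d \<inter> {- real R..real R}} \<union>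
     {x \<in> prime_pairs d \<inter> {- real R..real R}. x - real d \<in> prime_pairs d \<inter> {- real R..real R}} \<union>
     {x \<in> prime_pairs d \<inter> {- real R..real R}. real R - real d < \<bar>x\<bar>}"
  proof (cases "real R - real d < \<bar>x\<bar>")
    case True then show ?thesis using x by auto
  next
    case False
    then have "x + real d \<in> {- real R..real R}" "x - real d \<in> {- real R..real R}" by auto
    then show ?thesis using x pp_partner[of x d] by auto
  qed
qed

lemma ratio_lim:
  assumes d: "d \<ge> 1" and inf: "infinite (prime_pairs d)" and d3: "\<not> 3 dvd d" and r: "strict_mono r"
  shows "(\<lambda>n. real (Nd (prime_pairs d \<inter> {- real (r n)..real (r n)}) (real d)) /
              real (card (prime_pairs d \<inter> {- real (r n)..real (r n)}))) \<longlonglongrightarrow> 1 / 2"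
proof -
  define F where "F n = prime_pairs d \<inter> {- real (r n)..real (r n)}" for n
  define T where "T = {3 - real d, 3, 3 + real d, -3 - real d, -3, -3 + real d}"
  define c where "c n = real (card (F n))" for n
  have Ffin: "finite (F n)" for n unfolding F_def by (rule pp_trunc_finite)
  have ctop: "filterlim c at_top sequentially"
    unfolding c_def F_def by (rule card_trunc_top[OF inf r])
  have up: "2 * Nd (F n) (real d) \<le> card (F n) + card T" for n
  proof (rule count_upper[OF Ffin])
    show "finite T" unfolding T_def by simp
    have "{x \<in> F n. x - real d \<in> F n \<and> x + real d \<in> F n}
        \<subseteq> {x. x - real d \<in> signed_primes \<and> x \<in> signed_primes \<and> x + real d \<in> signed_primes}"
      unfolding F_def using pp_sp by blast
    then show "{x \<in> F n. x - real d \<in> F n \<and> x + real d \<in> F n} \<subseteq> T"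
      using triple_finite[OF d3] unfolding T_def by blast
  qed
  have lo: "card (F n) \<le> 2 * Nd (F n) (real d) + 2 * d" for n
  proof -
    have cov: "F n \<subseteq> {y \<in> F n. y + real d \<in> F n} \<union> {x \<in> F n. x - real d \<in> F n} \<union> {x \<in> F n. real (r n) - real d < \<bar>x\<bar>}"
      unfolding F_def by (rule trunc_cover)
    have finE: "finite {x \<in> F n. real (r n) - real d < \<bar>x\<bar>}" using Ffin[of n] by simp
    have "card (F n) \<le> 2 * Nd (F n) (real d) + card {x \<in> F n. real (r n) - real d < \<bar>x\<bar>}"
      by (rule count_lower[OF Ffin cov finE])
    moreover have "card {x \<in> F n. real (r n) - real d < \<bar>x\<bar>} \<le> 2 * d"
      unfolding F_def by (rule boundary_card[OF d])
    ultimately show ?thesis by linarith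
  qed
  have ev: "\<forall>\<^sub>F n in sequentially. c n > 0"
    using ctop unfolding filterlim_at_top_dense by blast
  let ?g = "\<lambda>n. real (Nd (F n) (real d)) / c n"
  have "?g \<longlonglongrightarrow> 1 / 2"
  proof (rule real_tendsto_sandwich[where f="\<lambda>n. 1/2 - real d * inverse (c n)" and h="\<lambda>n. 1/2 + real (card T) / 2 * inverse (c n)"])
    show "\<forall>\<^sub>F n in sequentially. 1/2 - real d * inverse (c n) \<le> ?g n"
      using ev
    proof eventually_elim
      case (elim n)
      have "real (card (F n)) \<le> 2 * real (Nd (F n) (real d)) + 2 * real d" using lo[of n] by linarith
      then have "c n / 2 - real d \<le> real (Nd (F n) (real d))" unfolding c_def by linarith
      then have "(c n / 2 - real d) / c n \<le> real (Nd (F n) (real d)) / c n"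
        using elim by (intro divide_right_mono) auto
      then show ?case using elim by (simp add: field_simps)
    qed
    show "\<forall>\<^sub>F n in sequentially. ?g n \<le> 1/2 + real (card T) / 2 * inverse (c n)"
      using ev
    proof eventually_elim
      case (elim n)
      have "2 * real (Nd (F n) (real d)) \<le> real (card (F n)) + real (card T)" using up[of n] by linarith
      then have "real (Nd (F n) (real d)) \<le> c n / 2 + real (card T) / 2" unfolding c_def by linarith
      then have "real (Nd (F n) (real d)) / c n \<le> (c n / 2 + real (card T) / 2) / c n"
        using elim by (intro divide_right_mono) auto
      then show ?case using elim by (simp add: field_simps)
    qed
    have i0: "(\<lambda>n. inverse (c n)) \<longlonglongrightarrow> 0" by (rule tendsto_inverse_0_at_top[OF ctop])
    have "(\<lambda>n. 1/2 - real d * inverse (c n)) \<longlonglongrightarrow> 1/2 - real d * 0" by (intro tendsto_intros i0)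
    then show "(\<lambda>n. 1/2 - real d * inverse (c n)) \<longlonglongrightarrow> 1/2" by simp
    have "(\<lambda>n. 1/2 + real (card T) / 2 * inverse (c n)) \<longlonglongrightarrow> 1/2 + real (card T) / 2 * 0" by (intro tendsto_intros i0)
    then show "(\<lambda>n. 1/2 + real (card T) / 2 * inverse (c n)) \<longlonglongrightarrow> 1/2" by simp
  qed
  then show ?thesis unfolding c_def F_def .
qed


lemma sum_ind_Nd:
  assumes F: "finite F"
  shows "(\<Sum>(x, y)\<in>F \<times> F. if x - y = a then 1 else 0 :: real) = real (Nd F a)"
proof -
  have "(\<Sum>(x, y)\<in>F \<times> F. if x - y = a then 1 else 0 :: real) = (\<Sum>z\<in>F \<times> F. if fst z - snd z = a then 1 else 0)"
    by (simp add: case_prod_beta)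
  also have "\<dots> = real (Nd F a)"
  proof -
    have e: "{z \<in> F \<times> F. fst z - snd z = a} = {(x, y) \<in> F \<times> F. x - y = a}" by auto
    show ?thesis unfolding Nd_def e[symmetric] using F by (simp add: sum.If_cases Int_def)
  qed
  finally show ?thesis .
qed

lemma meas_transfer:
  assumes "sets M = sets borel" "f \<in> borel_measurable borel"
  shows "f \<in> borel_measurable M"
  using assms by (simp add: measurable_cong_sets[OF assms(1) refl])

lemma shifted_tent:
  assumes c: "c > 0"
  shows "continuous_on UNIV (\<lambda>x. tent c (x - a))" "has_compact_support (\<lambda>x. tent c (x - a))"
proof -
  show "continuous_on UNIV (\<lambda>x. tent c (x - a))"
    by (intro continuous_on_compose2[OF tent_cont] continuous_intros) auto
  have "{x. tent c (x - a) \<noteq> 0} \<subseteq> cball a c"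
  proof
    fix x assume "x \<in> {x. tent c (x - a) \<noteq> 0}"
    then show "x \<in> cball a c" using tent_supp[OF c, of "x - a"] by (simp add: dist_real_def abs_minus_commute)
  qed
  then show "has_compact_support (\<lambda>x. tent c (x - a))"
    unfolding hcs_iff using bounded_cball bounded_subset by blast
qed

lemma pb_measure:
  assumes d: "d \<ge> 1" and inf: "infinite (prime_pairs d)" and d3: "\<not> 3 dvd d" and r: "strict_mono r"
    and CA: "count_autocorr (prime_pairs d) (\<lambda>n. {- real (r n)..real (r n)}) \<gamma>"
  shows "measure \<gamma> {real d} = 1 / 2"
proof -
  define F where "F n = prime_pairs d \<inter> {- real (r n)..real (r n)}" for n
  have Ffin: "finite (F n)" for n unfolding F_def by (rule pp_trunc_finite)
  have CA': "radon_measure \<gamma> \<and> (\<forall>f :: real \<Rightarrow> real. continuous_on UNIV f \<and> has_compact_support f \<longrightarrow>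
      (\<lambda>n. integral\<^sup>L (gammaF (F n)) f) \<longlonglongrightarrow> integral\<^sup>L \<gamma> f)"
    using CA unfolding count_autocorr_def vague_lim_def F_def .
  have rad: "radon_measure \<gamma>" using CA' by (rule conjunct1)
  have V: "(\<lambda>n. integral\<^sup>L (gammaF (F n)) f) \<longlonglongrightarrow> integral\<^sup>L \<gamma> f"
    if "continuous_on UNIV f" "has_compact_support f" for f :: "real \<Rightarrow> real"
    using CA' that by simp
  have sg: "sets \<gamma> = sets borel" using rad unfolding radon_measure_def by auto
  have spg: "space \<gamma> = UNIV" using sets_eq_imp_space_eq[OF sg] by simp
  define phi where "phi k x = tent (1 / real (Suc k)) (x - real d)" for k x
  have c0: "1 / real (Suc k) > 0" for k by simp
  have phic: "continuous_on UNIV (phi k)" "has_compact_support (phi k)" for k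
    unfolding phi_def[abs_def] using shifted_tent[OF c0] by auto
  have phiv: "phi k (x - y) = (if x - y = real d then 1 else 0)" if "x \<in> prime_pairs d" "y \<in> prime_pairs d" for k x y
  proof (cases "x - y = real d")
    case True then show ?thesis by (simp add: phi_def tent_def)
  next
    case False
    have "x - y - real d \<in> \<int>" using pp_Ints that by (intro Ints_diff) auto
    then have "1 \<le> \<bar>x - y - real d\<bar>" using False by (intro Ints_nonzero_abs_ge1) auto
    moreover have "1 / real (Suc k) \<le> 1" by simp
    ultimately have "phi k (x - y) = 0" unfolding phi_def by (intro tent_zero c0) linarith
    then show ?thesis using False by simp
  qed
  have seq: "integral\<^sup>L (gammaF (F n)) (phi k) = real (Nd (F n) (real d)) / real (card (F n))" for n k
  proof -
    have "integral\<^sup>L (gammaF (F n)) (phi k) = (1 / real (card (F n))) * (\<Sum>(x, y)\<in>F n \<times> F n. phi k (x - y))"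
      using gammaF_integral(2)[OF Ffin cont_meas[OF phic(1)]] by simp
    also have "(\<Sum>(x, y)\<in>F n \<times> F n. phi k (x - y)) = (\<Sum>(x, y)\<in>F n \<times> F n. if x - y = real d then 1 else 0)"
      by (intro sum.cong refl) (auto simp: F_def phiv)
    also have "\<dots> = real (Nd (F n) (real d))" by (rule sum_ind_Nd[OF Ffin])
    finally show ?thesis by simp
  qed
  have int_phi: "integral\<^sup>L \<gamma> (phi k) = 1 / 2" for k
  proof (rule LIMSEQ_unique)
    show "(\<lambda>n. integral\<^sup>L (gammaF (F n)) (phi k)) \<longlonglongrightarrow> integral\<^sup>L \<gamma> (phi k)" by (rule V[OF phic])
    show "(\<lambda>n. integral\<^sup>L (gammaF (F n)) (phi k)) \<longlonglongrightarrow> 1 / 2"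
      unfolding seq unfolding F_def by (rule ratio_lim[OF d inf d3 r])
  qed
  have "(\<lambda>k. integral\<^sup>L \<gamma> (phi k)) \<longlonglongrightarrow> integral\<^sup>L \<gamma> (indicator {real d} :: real \<Rightarrow> real)"
  proof (rule integral_dominated_convergence[where w="indicator {real d - 1..real d + 1}"])
    show "indicator {real d} \<in> borel_measurable \<gamma>" by (rule meas_transfer[OF sg]) simp
    show "phi k \<in> borel_measurable \<gamma>" for k by (rule meas_transfer[OF sg cont_meas[OF phic(1)]])
    show "integrable \<gamma> (indicator {real d - 1..real d + 1} :: real \<Rightarrow> real)"
    proof (rule integrable_real_indicator)
      show "{real d - 1..real d + 1} \<in> sets \<gamma>" using sg by simp
      show "emeasure \<gamma> {real d - 1..real d + 1} < \<infinity>"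
        using rad unfolding radon_measure_def by auto
    qed
    show "AE x in \<gamma>. (\<lambda>k. phi k x) \<longlonglongrightarrow> indicator {real d} x"
    proof (rule AE_I2)
      fix x
      show "(\<lambda>k. phi k x) \<longlonglongrightarrow> indicator {real d} x"
      proof (cases "x = real d")
        case True then show ?thesis by (simp add: phi_def tent_def)
      next
        case False
        then have pos: "\<bar>x - real d\<bar> > 0" by simp
        obtain N :: nat where N: "inverse (real (Suc N)) < \<bar>x - real d\<bar>"
          using reals_Archimedean[OF pos] by blast
        have "\<forall>k\<ge>N. phi k x = 0"
        proof (intro allI impI)
          fix k assume k: "N \<le> k"
          have "1 / real (Suc k) \<le> inverse (real (Suc N))" using k by (simp add: inverse_eq_divide frac_le)
          then show "phi k x = 0" unfolding phi_def using N by (intro tent_zero c0) linarith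
        qed
        then have "(\<lambda>k. phi k x) \<longlonglongrightarrow> 0"
          by (intro tendsto_eventually) (auto simp: eventually_sequentially)
        then show ?thesis using False by simp
      qed
    qed
    show "AE x in \<gamma>. norm (phi k x) \<le> indicator {real d - 1..real d + 1} x" for k
    proof (rule AE_I2)
      fix x
      show "norm (phi k x) \<le> indicator {real d - 1..real d + 1} x"
      proof (cases "x \<in> {real d - 1..real d + 1}")
        case True then show ?thesis using tent_le1[OF c0] tent_nonneg by (simp add: phi_def)
      next
        case False
        then have "\<bar>x - real d\<bar> \<ge> 1" by auto
        moreover have "1 / real (Suc k) \<le> 1" by simp
        ultimately have "phi k x = 0" unfolding phi_def by (intro tent_zero c0) linarith
        then show ?thesis by simp
      qed
    qed
  qed
  then have "(\<lambda>k. 1 / 2 :: real) \<longlonglongrightarrow> measure \<gamma> {real d}" using int_phi spg by simp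
  then show ?thesis by (rule LIMSEQ_unique[OF tendsto_const, symmetric])
qed


lemma GT_zero_eq:
  "(\<integral>x. (cmod (inv_fourier (fT d) x))\<^sup>2 \<partial>lborel) = GT d 0"
proof -
  have e: "(\<lambda>x. complex_of_real ((cmod (inv_fourier (fT d) x))\<^sup>2) * ee (-0 * x)) = (\<lambda>x. complex_of_real ((cmod (inv_fourier (fT d) x))\<^sup>2))"
    by simp
  have "complex_of_real (\<integral>x. (cmod (inv_fourier (fT d) x))\<^sup>2 \<partial>lborel)
      = (\<integral>x. complex_of_real ((cmod (inv_fourier (fT d) x))\<^sup>2) * ee (-0 * x) \<partial>lborel)"
    unfolding e by (rule integral_complex_of_real[symmetric])
  also have "\<dots> = conv_tilde (fT d) 0" by (rule inversion(2)[OF fT_cont fT_hcs])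
  also have "\<dots> = complex_of_real (GT d 0)" unfolding conv_fT ..
  finally show ?thesis by simp
qed

lemma GT_gamma_ineq:
  assumes F: "finite F" "F \<noteq> {}" and d: "d \<ge> 1"
  shows "integral\<^sup>L (gammaF F) (GT d) \<ge> GT d 0 + real (Nd F (real d)) / real (card F) * GT d (real d)"
proof -
  have c: "real (card F) > 0" using F by (simp add: card_gt_0_iff)
  have "integral\<^sup>L (gammaF F) (GT d) = (1 / real (card F)) * (\<Sum>(x, y)\<in>F \<times> F. GT d (x - y))"
    using gammaF_integral(2)[OF F(1) cont_meas[OF GT_cont]] by simp
  moreover have "(\<Sum>(x, y)\<in>F \<times> F. GT d (x - y)) \<ge> real (card F) * GT d 0 + real (Nd F (real d)) * GT d (real d)"
    by (rule key_ineq[OF F(1) GT_nonneg]) (use d in simp)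
  ultimately have "(1 / real (card F)) * (real (card F) * GT d 0 + real (Nd F (real d)) * GT d (real d)) \<le> integral\<^sup>L (gammaF F) (GT d)"
    using c by (simp only:) (rule mult_left_mono, auto)
  moreover have "(1 / real (card F)) * (real (card F) * GT d 0 + real (Nd F (real d)) * GT d (real d))
      = GT d 0 + real (Nd F (real d)) / real (card F) * GT d (real d)"
    using c by (simp add: field_simps)
  ultimately show ?thesis by simp

qed

lemma pb_notFT:
  assumes d: "d \<ge> 1" and inf: "infinite (prime_pairs d)" and d3: "\<not> 3 dvd d" and r: "strict_mono r"
    and CA: "count_autocorr (prime_pairs d) (\<lambda>n. {- real (r n)..real (r n)}) \<gamma>"
  shows "\<not> is_fourier_transform \<gamma> lborel"
proof
  assume FT: "is_fourier_transform \<gamma> lborel"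
  define F where "F n = prime_pairs d \<inter> {- real (r n)..real (r n)}" for n
  have Ffin: "finite (F n)" for n unfolding F_def by (rule pp_trunc_finite)
  have CA': "radon_measure \<gamma> \<and> (\<forall>f :: real \<Rightarrow> real. continuous_on UNIV f \<and> has_compact_support f \<longrightarrow>
      (\<lambda>n. integral\<^sup>L (gammaF (F n)) f) \<longlonglongrightarrow> integral\<^sup>L \<gamma> f)"
    using CA unfolding count_autocorr_def vague_lim_def F_def .
  have V: "(\<lambda>n. integral\<^sup>L (gammaF (F n)) (GT d)) \<longlonglongrightarrow> integral\<^sup>L \<gamma> (GT d)"
    using CA' GT_cont GT_hcs by simp
  have "(\<integral>x. conv_tilde (fT d) x \<partial>\<gamma>) = complex_of_real (\<integral>x. (cmod (inv_fourier (fT d) x))\<^sup>2 \<partial>lborel)"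
    using FT fT_cont fT_hcs unfolding is_fourier_transform_def by blast
  then have "complex_of_real (integral\<^sup>L \<gamma> (GT d)) = complex_of_real (GT d 0)"
    unfolding conv_fT GT_zero_eq by simp
  then have eq: "integral\<^sup>L \<gamma> (GT d) = GT d 0" by simp
  have ctop: "filterlim (\<lambda>n. real (card (F n))) at_top sequentially"
    unfolding F_def by (rule card_trunc_top[OF inf r])
  have ev: "\<forall>\<^sub>F n in sequentially. real (card (F n)) > 0"
    using ctop unfolding filterlim_at_top_dense by blast
  have lim2: "(\<lambda>n. GT d 0 + real (Nd (F n) (real d)) / real (card (F n)) * GT d (real d)) \<longlonglongrightarrow> GT d 0 + 1 / 2 * GT d (real d)"
  proof -
    have rl: "(\<lambda>n. real (Nd (F n) (real d)) / real (card (F n))) \<longlonglongrightarrow> 1 / 2"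
      unfolding F_def by (rule ratio_lim[OF d inf d3 r])
    show ?thesis by (rule tendsto_add[OF tendsto_const tendsto_mult[OF rl tendsto_const]])
  qed
  have "GT d 0 + 1 / 2 * GT d (real d) \<le> integral\<^sup>L \<gamma> (GT d)"
  proof (rule tendsto_le[OF _ V lim2])
    show "\<forall>\<^sub>F n in sequentially. GT d 0 + real (Nd (F n) (real d)) / real (card (F n)) * GT d (real d) \<le> integral\<^sup>L (gammaF (F n)) (GT d)"
      using ev
    proof eventually_elim
      case (elim n)
      then have "F n \<noteq> {}" by auto
      then show ?case by (rule GT_gamma_ineq[OF Ffin _ d])
    qed
  qed simp
  then show False using eq GT_pos[OF d] by simp
qed


lemma pa_notlborel:
  assumes d: "d \<ge> 1" and P: "finite (prime_pairs d)" "prime_pairs d \<noteq> {}"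
  shows "density lborel (\<lambda>x. ennreal (Re (hP (prime_pairs d) x))) \<noteq> lborel"
proof
  let ?P = "prime_pairs d"
  assume eq: "density lborel (\<lambda>x. ennreal (Re (hP ?P x))) = lborel"
  have "(\<integral>x. conv_tilde (fT d) x \<partial>gammaF ?P) = complex_of_real (\<integral>x. (cmod (inv_fourier (fT d) x))\<^sup>2 \<partial>density lborel (\<lambda>x. ennreal (Re (hP ?P x))))"
    using FT_a[OF P] fT_cont fT_hcs unfolding is_fourier_transform_def by blast
  then have "complex_of_real (integral\<^sup>L (gammaF ?P) (GT d)) = complex_of_real (GT d 0)"
    unfolding eq conv_fT GT_zero_eq by simp
  then have e: "integral\<^sup>L (gammaF ?P) (GT d) = GT d 0" by simp
  have N: "card ?P > 0" using P by (simp add: card_gt_0_iff)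
  have "2 * Nd ?P (real d) \<ge> card ?P" using pa_comb(1)[OF P(1)] by simp
  then have "Nd ?P (real d) \<ge> 1" using N by linarith
  then have "real (Nd ?P (real d)) / real (card ?P) * GT d (real d) > 0"
    using N GT_pos[OF d] by simp
  then show False using GT_gamma_ineq[OF P d] e by linarith
qed

lemma pa_measure:
  assumes P: "finite (prime_pairs d)" "prime_pairs d \<noteq> {}"
  shows "measure (gammaF (prime_pairs d)) {real d} \<ge> 1 / 2"
    and "measure (gammaF (prime_pairs d)) {real d} = 1 / 2 \<longleftrightarrow>
         \<not> (\<exists>p. p \<in> signed_primes \<and> p + real d \<in> signed_primes \<and> p + 2 * real d \<in> signed_primes)"
proof -
  let ?P = "prime_pairs d"
  let ?K = "{x \<in> ?P. x + real d \<in> ?P \<and> x - real d \<in> ?P}"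
  have N: "real (card ?P) > 0" using P by (simp add: card_gt_0_iff)
  have m: "measure (gammaF ?P) {real d} = real (Nd ?P (real d)) / real (card ?P)"
    by (rule gammaF_point[OF P(1)])
  have c: "2 * real (Nd ?P (real d)) = real (card ?P) + real (card ?K)"
    using pa_comb(1)[OF P(1)] by linarith
  have m2: "measure (gammaF ?P) {real d} = 1 / 2 + real (card ?K) / (2 * real (card ?P))"
    unfolding m using N c by (simp add: field_simps)
  show "measure (gammaF ?P) {real d} \<ge> 1 / 2" unfolding m2 using N by simp
  have fK: "finite ?K" using P(1) by simp
  have "measure (gammaF ?P) {real d} = 1 / 2 \<longleftrightarrow> card ?K = 0"
    unfolding m2 using N by simp
  also have "\<dots> \<longleftrightarrow> ?K = {}" using fK by simp
  also have "\<dots> \<longleftrightarrow> \<not> (\<exists>p. p \<in> signed_primes \<and> p + real d \<in> signed_primes \<and> p + 2 * real d \<in> signed_primes)"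
    by (rule pa_comb(2)[OF P(1)])
  finally show "measure (gammaF ?P) {real d} = 1 / 2 \<longleftrightarrow>
         \<not> (\<exists>p. p \<in> signed_primes \<and> p + real d \<in> signed_primes \<and> p + 2 * real d \<in> signed_primes)" .
qed

theorem proposition5p18:
  fixes d :: nat
  assumes "d \<ge> 1"
  shows
   "(prime_pairs d \<noteq> {} \<and> finite (prime_pairs d) \<longrightarrow>
      (let P = prime_pairs d; \<gamma> = gammaF P;
           h = (\<lambda>x::real. (1 / of_nat (card P)) *
                 (\<Sum>(p, q) \<in> P \<times> P. exp (2 * pi * \<i> * complex_of_real ((p - q) * x))))
       in count_autocorr P (\<lambda>n. {- real n .. real n}) \<gamma> \<and>
          \<gamma> \<noteq> dirac 0 \<and>
          (\<forall>x. Im (h x) = 0) \<and>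
          is_fourier_transform \<gamma> (density lborel (\<lambda>x. ennreal (Re (h x)))) \<and>
          density lborel (\<lambda>x. ennreal (Re (h x))) \<noteq> lborel \<and>
          measure \<gamma> {real d} \<ge> 1 / 2 \<and>
          (measure \<gamma> {real d} = 1 / 2 \<longleftrightarrow>
             \<not> (\<exists>p. p \<in> signed_primes \<and> p + real d \<in> signed_primes \<and>
                    p + 2 * real d \<in> signed_primes))))
    \<and>
    (infinite (prime_pairs d) \<and> \<not> (3 dvd d) \<longrightarrow>
      (\<forall>r :: nat \<Rightarrow> nat. \<forall>\<gamma>. strict_mono r \<longrightarrow>
          count_autocorr (prime_pairs d) (\<lambda>n. {- real (r n) .. real (r n)}) \<gamma> \<longrightarrow>
          measure \<gamma> {real d} = 1 / 2 \<and> \<not> is_fourier_transform \<gamma> lborel))"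
proof (intro conjI impI allI)
  assume A: "prime_pairs d \<noteq> {} \<and> finite (prime_pairs d)"
  then have P: "finite (prime_pairs d)" "prime_pairs d \<noteq> {}" by auto
  let ?P = "prime_pairs d"
  show "let P = prime_pairs d; \<gamma> = gammaF P;
           h = (\<lambda>x::real. (1 / of_nat (card P)) *
                 (\<Sum>(p, q) \<in> P \<times> P. exp (2 * pi * \<i> * complex_of_real ((p - q) * x))))
       in count_autocorr P (\<lambda>n. {- real n .. real n}) \<gamma> \<and>
          \<gamma> \<noteq> dirac 0 \<and>
          (\<forall>x. Im (h x) = 0) \<and>
          is_fourier_transform \<gamma> (density lborel (\<lambda>x. ennreal (Re (h x)))) \<and>
          density lborel (\<lambda>x. ennreal (Re (h x))) \<noteq> lborel \<and>
          measure \<gamma> {real d} \<ge> 1 / 2 \<and>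
          (measure \<gamma> {real d} = 1 / 2 \<longleftrightarrow>
             \<not> (\<exists>p. p \<in> signed_primes \<and> p + real d \<in> signed_primes \<and>
                    p + 2 * real d \<in> signed_primes))"
    unfolding Let_def hP_def[symmetric]
  proof (intro conjI)
    show "count_autocorr ?P (\<lambda>n. {- real n..real n}) (gammaF ?P)"
      unfolding count_autocorr_def vague_lim_def
      using gammaF_radon[OF P(1)] pa_vague[OF P(1)] by blast
    show "gammaF ?P \<noteq> dirac 0"
    proof
      assume "gammaF ?P = dirac 0"
      then have "measure (gammaF ?P) {real d} = 0" using assms by (simp add: measure_dirac)
      then show False using pa_measure(1)[OF P] by simp
    qed
    show "\<forall>x. Im (hP ?P x) = 0" using hP_Im[OF P(1)] by blast
    show "is_fourier_transform (gammaF ?P) (density lborel (\<lambda>x. ennreal (Re (hP ?P x))))"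
      by (rule FT_a[OF P])
    show "density lborel (\<lambda>x. ennreal (Re (hP ?P x))) \<noteq> lborel"
      by (rule pa_notlborel[OF assms P])
    show "measure (gammaF ?P) {real d} \<ge> 1 / 2" by (rule pa_measure(1)[OF P])
    show "measure (gammaF ?P) {real d} = 1 / 2 \<longleftrightarrow>
             \<not> (\<exists>p. p \<in> signed_primes \<and> p + real d \<in> signed_primes \<and> p + 2 * real d \<in> signed_primes)"
      by (rule pa_measure(2)[OF P])
  qed
next
  fix r :: "nat \<Rightarrow> nat" and \<gamma>
  assume B: "infinite (prime_pairs d) \<and> \<not> 3 dvd d" and r: "strict_mono r"
    and CA: "count_autocorr (prime_pairs d) (\<lambda>n. {- real (r n)..real (r n)}) \<gamma>"
  show "measure \<gamma> {real d} = 1 / 2" using pb_measure[OF assms _ _ r CA] B by blast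
  show "\<not> is_fourier_transform \<gamma> lborel" using pb_notFT[OF assms _ _ r CA] B by blast
qed


end
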